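(* Let $n\ge 2$, let $F_n$ be the free group on $x_1,\dots,x_n$, let $PW_n$ be the welded pure braid (McCool) group with generators $\xi_{i,j}$ ($1\le i\neq j\le n$), and let $F_n\rtimes PW_n$ be the semidirect product described in the context. For $1\le i\neq j\le n$ let $M_{i,j}$ be the $n\times n$ matrix over the group algebra $\mathbb{C}[F_n\rtimes PW_n]$ which equals the identity matrix except in its $i$-th row, whose $(i,i)$ entry is $x_j$, whose $(i,j)$ entry is $1-x_jx_ix_j^{-1}$, and whose other entries are $0$; and let $\mathcal{C}(\xi_{i,j})=\xi_{i,j}\cdot M_{i,j}$ be the matrix obtained by left-multiplying every entry of $M_{i,j}$ by $\xi_{i,j}$. Then the assignment $\xi_{i,j}\mapsto\mathcal{C}(\xi_{i,j})$ determines a faithful (injective) matrix representation $\Psi_n:PW_n\to GL(n,\mathbb{C}[F_n\rtimes PW_n])$.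
   Context: The group $PW_n$ is given by generators $\xi_{i,j}$, $1\le i\neq j\le n$, subject to the McCool relations: $[\xi_{i,j},\xi_{s,t}]=1$ if $\{i,j\}\cap\{s,t\}=\emptyset$; $[\xi_{i,j},\xi_{k,j}]=1$ for $i,j,k$ distinct; $[\xi_{i,j}\xi_{k,j},\xi_{i,k}]=1$ for $i,j,k$ distinct, where $[a,b]=a^{-1}b^{-1}ab$. (Equivalently, $PW_n$ is the kernel of the map from the welded braid group $WB_n$ to the symmetric group sending $\sigma_i,\tau_i\mapsto\tau_i$.) For each generator, let $\varphi_{i,j}$ be the automorphism of $F_n$ with $\varphi_{i,j}(x_i)=x_jx_ix_j^{-1}$ and $\varphi_{i,j}(x_k)=x_k$ for $k\neq i$. The semidirect product $F_n\rtimes PW_n$ is the group generated by $F_n$ and $PW_n$, containing $F_n$ as a normal subgroup with $(F_n\rtimes PW_n)/F_n\cong PW_n$, in which $\xi_{i,j}^{-1}\,x_k\,\xi_{i,j}=\varphi_{i,j}(x_k)$ for all $k$ (this is the semidirect product coming from the faithful Artin embedding of $PW_n$ into $\mathrm{Aut}(F_n)$). Matrices are multiplied in the usual way over the noncommutative ring $\mathbb{C}[F_n\rtimes PW_n]$. *)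

theory Defs
  imports Complex_Main "HOL-Algebra.Group"
begin

text \<open>A word over an alphabet: letters with exponent True (= +1) or False (= -1).\<close>
type_synonym 'a word = "('a \<times> bool) list"

definition inv_word :: "'a word \<Rightarrow> 'a word" where
  "inv_word w = rev (map (\<lambda>(a, b). (a, \<not> b)) w)"

definition comm_word :: "'a word \<Rightarrow> 'a word \<Rightarrow> 'a word" where
  "comm_word u v = inv_word u @ inv_word v @ u @ v"

inductive pres_rel :: "'a word set \<Rightarrow> 'a word \<Rightarrow> 'a word \<Rightarrow> bool" for R where
  pr_refl: "pres_rel R w w"
| pr_sym: "pres_rel R u v \<Longrightarrow> pres_rel R v u"
| pr_trans: "pres_rel R u v \<Longrightarrow> pres_rel R v w \<Longrightarrow> pres_rel R u w"
| pr_cancel: "pres_rel R (u @ [(a, b), (a, \<not> b)] @ v) (u @ v)"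
| pr_relator: "r \<in> R \<Longrightarrow> pres_rel R (u @ r @ v) (u @ v)"

definition pres_class :: "'a word set \<Rightarrow> 'a word \<Rightarrow> 'a word set" where
  "pres_class R w = {v. pres_rel R w v}"

definition presented_group :: "'a set \<Rightarrow> 'a word set \<Rightarrow> 'a word set monoid" where
  "presented_group S R =
     \<lparr> carrier = {pres_class R w | w. set w \<subseteq> S \<times> UNIV},
       mult = (\<lambda>X Y. \<Union>u\<in>X. \<Union>v\<in>Y. pres_class R (u @ v)),
       one = pres_class R [] \<rparr>"

definition gen_class :: "'a word set \<Rightarrow> 'a \<Rightarrow> 'a word set" where
  "gen_class R a = pres_class R [(a, True)]"

text \<open>Generator xi_{i,j} is the letter (i,j), 1 <= i ~= j <= n.\<close>
definition pw_gens :: "nat \<Rightarrow> (nat \<times> nat) set" where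
  "pw_gens n = {(i, j). i \<in> {1..n} \<and> j \<in> {1..n} \<and> i \<noteq> j}"

definition mccool_rels :: "nat \<Rightarrow> ('a \<Rightarrow> 'b) \<Rightarrow> (nat \<times> nat \<Rightarrow> 'a) \<Rightarrow> 'b word set" where
  "mccool_rels n emb g =
     (let l = (\<lambda>i j. (emb (g (i, j)), True)) in
      {comm_word [l i j] [l s t] | i j s t.
         (i, j) \<in> pw_gens n \<and> (s, t) \<in> pw_gens n \<and> {i, j} \<inter> {s, t} = {}}
    \<union> {comm_word [l i j] [l k j] | i j k.
         i \<in> {1..n} \<and> j \<in> {1..n} \<and> k \<in> {1..n} \<and> i \<noteq> j \<and> j \<noteq> k \<and> i \<noteq> k}
    \<union> {comm_word [l i j, l k j] [l i k] | i j k.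
         i \<in> {1..n} \<and> j \<in> {1..n} \<and> k \<in> {1..n} \<and> i \<noteq> j \<and> j \<noteq> k \<and> i \<noteq> k})"

definition PW_rels :: "nat \<Rightarrow> (nat \<times> nat) word set" where
  "PW_rels n = mccool_rels n id id"

definition PW :: "nat \<Rightarrow> (nat \<times> nat) word set monoid" where
  "PW n = presented_group (pw_gens n) (PW_rels n)"

text \<open>Relations: the McCool relations
  among the xi's, and xi_{i,j}^-1 x_k xi_{i,j} = phi_{i,j}(x_k), i.e.
  xi^-1 x_k xi = x_k for k ~= i and xi^-1 x_i xi = x_j x_i x_j^-1.\<close>
datatype sgen = X nat | Xi nat nat

definition SD_gens :: "nat \<Rightarrow> sgen set" where
  "SD_gens n = {X k | k. k \<in> {1..n}} \<union> {Xi i j | i j. (i, j) \<in> pw_gens n}"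

definition SD_rels :: "nat \<Rightarrow> sgen word set" where
  "SD_rels n = mccool_rels n id (\<lambda>(i, j). Xi i j)
    \<union> {[(Xi i j, False), (X k, True), (Xi i j, True), (X k, False)] | i j k.
         (i, j) \<in> pw_gens n \<and> k \<in> {1..n} \<and> k \<noteq> i}
    \<union> {[(Xi i j, False), (X i, True), (Xi i j, True), (X j, True), (X i, False), (X j, False)]
         | i j. (i, j) \<in> pw_gens n}"

definition SD :: "nat \<Rightarrow> sgen word set monoid" where
  "SD n = presented_group (SD_gens n) (SD_rels n)"

definition x_el :: "nat \<Rightarrow> nat \<Rightarrow> sgen word set" where
  "x_el n k = gen_class (SD_rels n) (X k)"

definition xi_el :: "nat \<Rightarrow> nat \<Rightarrow> nat \<Rightarrow> sgen word set" where
  "xi_el n i j = gen_class (SD_rels n) (Xi i j)"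

text \<open>Elements of C[G]: finitely supported functions G \<Rightarrow> complex.\<close>
definition delta :: "'g \<Rightarrow> 'g \<Rightarrow> complex" where
  "delta g = (\<lambda>z. if z = g then 1 else 0)"

definition conv :: "('g, 'b) monoid_scheme \<Rightarrow> ('g \<Rightarrow> complex) \<Rightarrow> ('g \<Rightarrow> complex) \<Rightarrow> 'g \<Rightarrow> complex" where
  "conv G f g = (\<lambda>z. \<Sum>p\<in>{x. f x \<noteq> 0} \<times> {y. g y \<noteq> 0}.
                    if fst p \<otimes>\<^bsub>G\<^esub> snd p = z then f (fst p) * g (snd p) else 0)"

definition in_group_algebra :: "('g, 'b) monoid_scheme \<Rightarrow> ('g \<Rightarrow> complex) \<Rightarrow> bool" where
  "in_group_algebra G f \<longleftrightarrow> finite {x. f x \<noteq> 0} \<and> {x. f x \<noteq> 0} \<subseteq> carrier G"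

text \<open>n x n matrices, indexed by 1..n, entries zero outside that range.\<close>
type_synonym 'g gmat = "nat \<Rightarrow> nat \<Rightarrow> 'g \<Rightarrow> complex"

definition is_mat :: "('g, 'b) monoid_scheme \<Rightarrow> nat \<Rightarrow> 'g gmat \<Rightarrow> bool" where
  "is_mat G n A \<longleftrightarrow> (\<forall>i j. (i \<notin> {1..n} \<or> j \<notin> {1..n}) \<longrightarrow> A i j = (\<lambda>_. 0))
                     \<and> (\<forall>i j. in_group_algebra G (A i j))"

definition mat_mult :: "('g, 'b) monoid_scheme \<Rightarrow> nat \<Rightarrow> 'g gmat \<Rightarrow> 'g gmat \<Rightarrow> 'g gmat" where
  "mat_mult G n A B = (\<lambda>i j. if i \<in> {1..n} \<and> j \<in> {1..n}
        then (\<lambda>z. \<Sum>k\<in>{1..n}. conv G (A i k) (B k j) z) else (\<lambda>_. 0))"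

definition mat_one :: "('g, 'b) monoid_scheme \<Rightarrow> nat \<Rightarrow> 'g gmat" where
  "mat_one G n = (\<lambda>i j. if i \<in> {1..n} \<and> j \<in> {1..n} \<and> i = j
        then delta \<one>\<^bsub>G\<^esub> else (\<lambda>_. 0))"

definition GL :: "('g, 'b) monoid_scheme \<Rightarrow> nat \<Rightarrow> 'g gmat monoid" where
  "GL G n = \<lparr> carrier = {A. is_mat G n A \<and> (\<exists>B. is_mat G n B \<and>
                   mat_mult G n A B = mat_one G n \<and> mat_mult G n B A = mat_one G n)},
              mult = mat_mult G n,
              one = mat_one G n \<rparr>"

definition M_mat :: "nat \<Rightarrow> nat \<Rightarrow> nat \<Rightarrow> sgen word set gmat" where
  "M_mat n i j = (\<lambda>a b.
     if a \<in> {1..n} \<and> b \<in> {1..n} then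
       (if a = i then
          (if b = i then delta (x_el n j)
           else if b = j then (\<lambda>z. delta \<one>\<^bsub>SD n\<^esub> z
                 - delta (x_el n j \<otimes>\<^bsub>SD n\<^esub> x_el n i \<otimes>\<^bsub>SD n\<^esub> inv\<^bsub>SD n\<^esub> x_el n j) z)
           else (\<lambda>_. 0))
        else (if a = b then delta \<one>\<^bsub>SD n\<^esub> else (\<lambda>_. 0)))
     else (\<lambda>_. 0))"

definition C_mat :: "nat \<Rightarrow> nat \<Rightarrow> nat \<Rightarrow> sgen word set gmat" where
  "C_mat n i j = (\<lambda>a b. conv (SD n) (delta (xi_el n i j)) (M_mat n i j a b))"

end

theory Submission
  imports Defs
begin

section \<open>Presented groups\<close>

lemma pres_rel_app_left: "pres_rel R u v \<Longrightarrow> pres_rel R (p @ u) (p @ v)"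
proof (induction rule: pres_rel.induct)
  case (pr_cancel u a b v)
  show ?case using pres_rel.pr_cancel[of R "p @ u" a b v] by simp
next
  case (pr_relator r u v)
  show ?case using pres_rel.pr_relator[OF pr_relator(1), of "p @ u" v] by simp
next
  case (pr_refl w) show ?case by (rule pres_rel.pr_refl)
next
  case (pr_sym u v) show ?case by (rule pres_rel.pr_sym[OF pr_sym.IH])
next
  case (pr_trans u v w) show ?case by (rule pres_rel.pr_trans[OF pr_trans.IH(1) pr_trans.IH(2)])
qed

lemma pres_rel_app_right: "pres_rel R u v \<Longrightarrow> pres_rel R (u @ q) (v @ q)"
proof (induction rule: pres_rel.induct)
  case (pr_cancel u a b v)
  show ?case using pres_rel.pr_cancel[of R u a b "v @ q"] by simp
next
  case (pr_relator r u v)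
  show ?case using pres_rel.pr_relator[OF pr_relator(1), of u "v @ q"] by simp
next
  case (pr_refl w) show ?case by (rule pres_rel.pr_refl)
next
  case (pr_sym u v) show ?case by (rule pres_rel.pr_sym[OF pr_sym.IH])
next
  case (pr_trans u v w) show ?case by (rule pres_rel.pr_trans[OF pr_trans.IH(1) pr_trans.IH(2)])
qed

lemma pres_rel_app: "pres_rel R u v \<Longrightarrow> pres_rel R u' v' \<Longrightarrow> pres_rel R (u @ u') (v @ v')"
  by (meson pres_rel.pr_trans pres_rel_app_left pres_rel_app_right)

lemma pres_class_eq: "pres_class R u = pres_class R v \<longleftrightarrow> pres_rel R u v"
proof
  assume "pres_class R u = pres_class R v"
  then have "v \<in> pres_class R u" unfolding pres_class_def using pres_rel.pr_refl[of R v] by blast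
  then show "pres_rel R u v" by (simp add: pres_class_def)
next
  assume uv: "pres_rel R u v"
  have "pres_rel R u = pres_rel R v"
    by (rule ext) (use uv in \<open>meson pres_rel.pr_sym pres_rel.pr_trans\<close>)
  then show "pres_class R u = pres_class R v"
    unfolding pres_class_def by simp
qed

lemma pres_class_mem: "w \<in> pres_class R u \<longleftrightarrow> pres_rel R u w"
  by (simp add: pres_class_def)

lemma pres_mult:
  "pres_class R u \<otimes>\<^bsub>presented_group S R\<^esub> pres_class R v = pres_class R (u @ v)"
proof -
  have eq: "pres_class R (u' @ v') = pres_class R (u @ v)"
    if "u' \<in> pres_class R u" "v' \<in> pres_class R v" for u' v'
  proof -
    have "pres_rel R (u @ v) (u' @ v')"
      using that unfolding pres_class_mem by (rule pres_rel_app)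
    then show ?thesis unfolding pres_class_eq[symmetric] by (rule sym)
  qed
  have ne: "pres_class R u \<noteq> {}" "pres_class R v \<noteq> {}"
    unfolding pres_class_mem pres_class_def using pres_rel.pr_refl by blast+
  have "(\<Union>u'\<in>pres_class R u. \<Union>v'\<in>pres_class R v. pres_class R (u' @ v'))
      = (\<Union>u'\<in>pres_class R u. \<Union>v'\<in>pres_class R v. pres_class R (u @ v))"
    by (intro SUP_cong refl eq)
  also have "\<dots> = pres_class R (u @ v)" using ne by (simp only: UN_constant if_False)
  finally show ?thesis unfolding presented_group_def by simp
qed

lemma pres_one: "\<one>\<^bsub>presented_group S R\<^esub> = pres_class R []"
  by (simp add: presented_group_def)

lemma pres_carrier: "carrier (presented_group S R) = {pres_class R w | w. set w \<subseteq> S \<times> UNIV}"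
  by (simp add: presented_group_def)

lemma inv_word_simps [simp]: "inv_word [] = []"
  "inv_word (x # w) = inv_word w @ [(fst x, \<not> snd x)]"
  "inv_word (u @ v) = inv_word v @ inv_word u"
  by (auto simp: inv_word_def split: prod.splits)

lemma inv_word_set: "set (inv_word w) \<subseteq> S \<times> UNIV \<longleftrightarrow> set w \<subseteq> S \<times> UNIV"
  by (auto simp: inv_word_def)

lemma pres_rel_inv_r: "pres_rel R (w @ inv_word w) []"
proof (induction w)
  case Nil then show ?case by (simp add: pres_rel.pr_refl)
next
  case (Cons x w)
  obtain a b where x: "x = (a, b)" by force
  have h1: "pres_rel R ([x] @ (w @ inv_word w) @ [(a, \<not> b)]) ([x] @ [] @ [(a, \<not> b)])"
    by (intro pres_rel_app_left pres_rel_app_right Cons)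
  have h2: "pres_rel R ([] @ [(a,b), (a, \<not>b)] @ []) ([] @ [])"
    by (rule pres_rel.pr_cancel)
  have h: "pres_rel R ([x] @ (w @ inv_word w) @ [(a, \<not> b)]) ([] @ [])"
    by (rule pres_rel.pr_trans[OF h1]) (use h2 x in simp)
  show ?case using h x by simp
qed

lemma pres_rel_inv_l: "pres_rel R (inv_word w @ w) []"
proof (induction w)
  case Nil then show ?case by (simp add: pres_rel.pr_refl)
next
  case (Cons x w)
  obtain a b where x: "x = (a, b)" by force
  have "pres_rel R (inv_word w @ [(a, \<not> b), (a, \<not>\<not>b)] @ w) (inv_word w @ w)"
    by (rule pres_rel.pr_cancel)
  then have "pres_rel R (inv_word (x # w) @ (x # w)) (inv_word w @ w)"
    using x by simp
  then show ?case by (rule pres_rel.pr_trans[OF _ Cons.IH])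
qed

lemma presented_group_is_group: "group (presented_group S R)"
proof (rule groupI)
  fix x y assume "x \<in> carrier (presented_group S R)" "y \<in> carrier (presented_group S R)"
  then obtain u v where "x = pres_class R u" "y = pres_class R v" "set u \<subseteq> S \<times> UNIV" "set v \<subseteq> S \<times> UNIV"
    by (auto simp: pres_carrier)
  then show "x \<otimes>\<^bsub>presented_group S R\<^esub> y \<in> carrier (presented_group S R)"
    by (auto simp: pres_mult pres_carrier intro!: exI[of _ "u @ v"])
next
  show "\<one>\<^bsub>presented_group S R\<^esub> \<in> carrier (presented_group S R)"
    by (auto simp: pres_one pres_carrier intro!: exI[of _ "[]"])
next
  fix x y z assume "x \<in> carrier (presented_group S R)" "y \<in> carrier (presented_group S R)"
    "z \<in> carrier (presented_group S R)"
  then show "x \<otimes>\<^bsub>presented_group S R\<^esub> y \<otimes>\<^bsub>presented_group S R\<^esub> z =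
           x \<otimes>\<^bsub>presented_group S R\<^esub> (y \<otimes>\<^bsub>presented_group S R\<^esub> z)"
    by (auto simp: pres_carrier pres_mult)
next
  fix x assume "x \<in> carrier (presented_group S R)"
  then show "\<one>\<^bsub>presented_group S R\<^esub> \<otimes>\<^bsub>presented_group S R\<^esub> x = x"
    by (auto simp: pres_carrier pres_mult pres_one)
next
  fix x assume "x \<in> carrier (presented_group S R)"
  then obtain u where u: "x = pres_class R u" "set u \<subseteq> S \<times> UNIV" by (auto simp: pres_carrier)
  show "\<exists>y\<in>carrier (presented_group S R). y \<otimes>\<^bsub>presented_group S R\<^esub> x = \<one>\<^bsub>presented_group S R\<^esub>"
  proof (intro bexI)
    show "pres_class R (inv_word u) \<otimes>\<^bsub>presented_group S R\<^esub> x = \<one>\<^bsub>presented_group S R\<^esub>"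
      using u by (simp add: pres_mult pres_one pres_class_eq pres_rel_inv_l)
    show "pres_class R (inv_word u) \<in> carrier (presented_group S R)"
      using u inv_word_set[of u S] by (auto simp: pres_carrier intro!: exI[of _ "inv_word u"])
  qed
qed

definition evalw :: "('b, 'c) monoid_scheme \<Rightarrow> ('a \<Rightarrow> bool \<Rightarrow> 'b) \<Rightarrow> 'a word \<Rightarrow> 'b" where
  "evalw H f w = foldr (\<lambda>(a, b) acc. f a b \<otimes>\<^bsub>H\<^esub> acc) w \<one>\<^bsub>H\<^esub>"

lemma evalw_simps [simp]: "evalw H f [] = \<one>\<^bsub>H\<^esub>"
  "evalw H f ((a, b) # w) = f a b \<otimes>\<^bsub>H\<^esub> evalw H f w"
  by (simp_all add: evalw_def)

context monoid
begin

lemma evalw_closed: "(\<And>a b. f a b \<in> carrier G) \<Longrightarrow> evalw G f w \<in> carrier G"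
  by (induction w) auto

lemma evalw_append: "(\<And>a b. f a b \<in> carrier G) \<Longrightarrow> evalw G f (u @ v) = evalw G f u \<otimes> evalw G f v"
  by (induction u) (auto simp: evalw_closed m_assoc)

lemma evalw_pres_rel:
  assumes cl: "\<And>a b. f a b \<in> carrier G"
    and inv: "\<And>a b. f a b \<otimes> f a (\<not> b) = \<one>"
    and rels: "\<And>r. r \<in> R \<Longrightarrow> evalw G f r = \<one>"
    and "pres_rel R u v"
  shows "evalw G f u = evalw G f v"
  using assms(4)
proof (induction rule: pres_rel.induct)
  case (pr_cancel u a b v)
  have "f a b \<otimes> (f a (\<not> b) \<otimes> evalw G f v) = evalw G f v"
    using inv[of a b] cl by (simp add: m_assoc[symmetric] evalw_closed)
  then show ?case using cl by (simp add: evalw_append evalw_closed)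
next
  case (pr_relator r u v)
  then show ?case using cl rels by (simp add: evalw_append evalw_closed)
qed auto

end

lemma presented_hom:
  assumes H: "monoid H"
    and cl: "\<And>a b. f a b \<in> carrier H"
    and inv: "\<And>a b. f a b \<otimes>\<^bsub>H\<^esub> f a (\<not> b) = \<one>\<^bsub>H\<^esub>"
    and rels: "\<And>r. r \<in> R \<Longrightarrow> evalw H f r = \<one>\<^bsub>H\<^esub>"
  shows "\<exists>\<Psi>. \<Psi> \<in> hom (presented_group S R) H \<and> (\<forall>w. \<Psi> (pres_class R w) = evalw H f w)"
proof -
  define \<Psi> where "\<Psi> X = evalw H f (SOME w. w \<in> X)" for X
  have ev: "\<Psi> (pres_class R w) = evalw H f w" for w
  proof -
    have "w \<in> pres_class R w" by (simp add: pres_class_mem pres_rel.pr_refl)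
    then have "(SOME w'. w' \<in> pres_class R w) \<in> pres_class R w" by (rule someI)
    then have "pres_rel R w (SOME w'. w' \<in> pres_class R w)" by (simp add: pres_class_mem)
    then show ?thesis unfolding \<Psi>_def
      using monoid.evalw_pres_rel[OF H cl inv rels] by metis
  qed
  have "\<Psi> \<in> hom (presented_group S R) H"
  proof (rule homI)
    fix x assume "x \<in> carrier (presented_group S R)"
    then show "\<Psi> x \<in> carrier H" using ev monoid.evalw_closed[OF H cl] by (auto simp: pres_carrier)
  next
    fix x y assume "x \<in> carrier (presented_group S R)" "y \<in> carrier (presented_group S R)"
    then show "\<Psi> (x \<otimes>\<^bsub>presented_group S R\<^esub> y) = \<Psi> x \<otimes>\<^bsub>H\<^esub> \<Psi> y"
      using ev monoid.evalw_append[OF H cl] by (auto simp: pres_carrier pres_mult)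
  qed
  then show ?thesis using ev by blast
qed

definition geval :: "'a word set \<Rightarrow> 'a set \<Rightarrow> 'a word \<Rightarrow> 'a word set" where
  "geval R S w = foldr (\<lambda>(a, b) acc. (if b then gen_class R a else inv\<^bsub>presented_group S R\<^esub> gen_class R a)
        \<otimes>\<^bsub>presented_group S R\<^esub> acc) w \<one>\<^bsub>presented_group S R\<^esub>"

lemma gen_class_carrier: "a \<in> S \<Longrightarrow> gen_class R a \<in> carrier (presented_group S R)"
  by (auto simp: gen_class_def pres_carrier intro!: exI[of _ "[(a, True)]"])

lemma pres_class_geval: "set w \<subseteq> S \<times> UNIV \<Longrightarrow> pres_class R w = geval R S w"
proof (induction w)
  case Nil then show ?case by (simp add: geval_def pres_one)
next
  case (Cons x w)
  interpret group "presented_group S R" by (rule presented_group_is_group)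
  obtain a b where x: "x = (a, b)" by force
  have a: "a \<in> S" using Cons x by auto
  have "pres_class R (x # w) = pres_class R [x] \<otimes>\<^bsub>presented_group S R\<^esub> pres_class R w"
    by (simp add: pres_mult)
  moreover have "pres_class R [x] = (if b then gen_class R a else inv\<^bsub>presented_group S R\<^esub> gen_class R a)"
  proof (cases b)
    case True then show ?thesis by (simp add: x gen_class_def)
  next
    case False
    have "pres_class R [(a, False)] \<otimes>\<^bsub>presented_group S R\<^esub> gen_class R a = \<one>\<^bsub>presented_group S R\<^esub>"
      using pres_rel.pr_cancel[of R "[]" a False "[]"]
      by (simp add: gen_class_def pres_mult pres_one pres_class_eq)
    moreover have "pres_class R [(a, False)] \<in> carrier (presented_group S R)"
      using a by (auto simp: pres_carrier intro!: exI[of _ "[(a, False)]"])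
    ultimately show ?thesis using False x inv_equality gen_class_carrier[OF a] by auto
  qed
  ultimately show ?case using Cons x by (simp add: geval_def)
qed

lemma relator_geval:
  assumes "r \<in> R" "set r \<subseteq> S \<times> UNIV"
  shows "geval R S r = \<one>\<^bsub>presented_group S R\<^esub>"
proof -
  have "pres_class R r = pres_class R []"
    using pres_rel.pr_relator[OF assms(1), of "[]" "[]"] by (simp add: pres_class_eq)
  then show ?thesis using pres_class_geval[OF assms(2)] by (simp add: pres_one)
qed

section \<open>Group algebra\<close>

definition gsupp :: "('g \<Rightarrow> complex) \<Rightarrow> 'g set" where
  "gsupp f = {x. f x \<noteq> 0}"

lemma delta_simps: "delta a z = (if z = a then 1 else 0)"
  by (simp add: delta_def)

lemma gsupp_delta: "gsupp (delta a) = {a}"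
  by (auto simp: gsupp_def delta_def)

lemma conv_superset:
  assumes "finite A" "finite B" "gsupp f \<subseteq> A" "gsupp g \<subseteq> B"
  shows "conv G f g z = (\<Sum>x\<in>A. \<Sum>y\<in>B. f x * g y * delta (x \<otimes>\<^bsub>G\<^esub> y) z)"
proof -
  have "conv G f g z = (\<Sum>p\<in>gsupp f \<times> gsupp g.
          if fst p \<otimes>\<^bsub>G\<^esub> snd p = z then f (fst p) * g (snd p) else 0)"
    by (simp add: conv_def gsupp_def)
  also have "\<dots> = (\<Sum>p\<in>A \<times> B. if fst p \<otimes>\<^bsub>G\<^esub> snd p = z then f (fst p) * g (snd p) else 0)"
    using assms by (intro sum.mono_neutral_left) (auto simp: gsupp_def)
  also have "\<dots> = (\<Sum>p\<in>A \<times> B. f (fst p) * g (snd p) * delta (fst p \<otimes>\<^bsub>G\<^esub> snd p) z)"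
    by (intro sum.cong refl) (auto simp: delta_def)
  also have "\<dots> = (\<Sum>x\<in>A. \<Sum>y\<in>B. f x * g y * delta (x \<otimes>\<^bsub>G\<^esub> y) z)"
    unfolding sum.cartesian_product by (simp add: case_prod_beta)
  finally show ?thesis .
qed

definition ga :: "('g, 'b) monoid_scheme \<Rightarrow> ('g \<Rightarrow> complex) \<Rightarrow> bool" where
  "ga G f \<longleftrightarrow> finite (gsupp f) \<and> gsupp f \<subseteq> carrier G"

lemma ga_iga: "ga G f = in_group_algebra G f"
  by (simp add: ga_def in_group_algebra_def gsupp_def)

lemma ga_delta: "a \<in> carrier G \<Longrightarrow> ga G (delta a)"
  by (simp add: ga_def gsupp_delta)

lemma ga_zero: "ga G (\<lambda>_. 0)"
  by (simp add: ga_def gsupp_def)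

lemma ga_add: "ga G f \<Longrightarrow> ga G g \<Longrightarrow> ga G (\<lambda>z. f z + g z)"
proof -
  assume "ga G f" "ga G g"
  moreover have "gsupp (\<lambda>z. f z + g z) \<subseteq> gsupp f \<union> gsupp g" by (auto simp: gsupp_def)
  ultimately show ?thesis unfolding ga_def by (meson finite_Un finite_subset le_sup_iff order_trans)
qed

lemma ga_sub: "ga G f \<Longrightarrow> ga G g \<Longrightarrow> ga G (\<lambda>z. f z - g z)"
proof -
  assume "ga G f" "ga G g"
  moreover have "gsupp (\<lambda>z. f z - g z) \<subseteq> gsupp f \<union> gsupp g" by (auto simp: gsupp_def)
  ultimately show ?thesis unfolding ga_def by (meson finite_Un finite_subset le_sup_iff order_trans)
qed

lemma ga_sum: "finite K \<Longrightarrow> (\<And>k. k \<in> K \<Longrightarrow> ga G (F k)) \<Longrightarrow> ga G (\<lambda>z. \<Sum>k\<in>K. F k z)"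
proof (induction K rule: finite_induct)
  case empty then show ?case by (simp add: ga_zero)
next
  case (insert k K)
  then show ?case using ga_add[of G "F k" "\<lambda>z. \<Sum>k\<in>K. F k z"] by simp
qed

lemma gsupp_conv: "gsupp (conv G f g) \<subseteq> (\<lambda>p. fst p \<otimes>\<^bsub>G\<^esub> snd p) ` (gsupp f \<times> gsupp g)"
proof
  fix z assume z: "z \<in> gsupp (conv G f g)"
  show "z \<in> (\<lambda>p. fst p \<otimes>\<^bsub>G\<^esub> snd p) ` (gsupp f \<times> gsupp g)"
  proof (rule ccontr)
    assume nz: "z \<notin> (\<lambda>p. fst p \<otimes>\<^bsub>G\<^esub> snd p) ` (gsupp f \<times> gsupp g)"
    have "(\<Sum>p\<in>gsupp f \<times> gsupp g. if fst p \<otimes>\<^bsub>G\<^esub> snd p = z then f (fst p) * g (snd p) else 0) = 0"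
    proof (rule sum.neutral, rule ballI)
      fix p assume "p \<in> gsupp f \<times> gsupp g"
      then have "fst p \<otimes>\<^bsub>G\<^esub> snd p \<noteq> z" using nz by blast
      then show "(if fst p \<otimes>\<^bsub>G\<^esub> snd p = z then f (fst p) * g (snd p) else 0) = 0" by simp
    qed
    then have "conv G f g z = 0" by (simp add: conv_def gsupp_def)
    then show False using z by (simp add: gsupp_def)
  qed
qed

lemma ga_conv:
  assumes G: "monoid G" and f: "ga G f" and g: "ga G g"
  shows "ga G (conv G f g)"
proof -
  let ?P = "(\<lambda>p. fst p \<otimes>\<^bsub>G\<^esub> snd p) ` (gsupp f \<times> gsupp g)"
  have "finite ?P" using f g by (simp add: ga_def)
  moreover have "?P \<subseteq> carrier G"
  proof
    fix z assume "z \<in> ?P"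
    then obtain a b where "a \<in> gsupp f" "b \<in> gsupp g" "z = a \<otimes>\<^bsub>G\<^esub> b" by auto
    then show "z \<in> carrier G" using f g monoid.m_closed[OF G] by (auto simp: ga_def)
  qed
  ultimately show ?thesis using gsupp_conv[of G f g] unfolding ga_def
    by (meson finite_subset order_trans)
qed

lemma if_add_zero: "(if c then (a::complex) + b else 0) = (if c then a else 0) + (if c then b else 0)"
  by simp

lemma conv_add_right:
  assumes "ga G f" "ga G g1" "ga G g2"
  shows "conv G f (\<lambda>z. g1 z + g2 z) = (\<lambda>z. conv G f g1 z + conv G f g2 z)"
proof
  fix z
  let ?A = "gsupp f" and ?B = "gsupp g1 \<union> gsupp g2"
  have fin: "finite ?A" "finite ?B" using assms by (auto simp: ga_def)
  have s: "gsupp (\<lambda>z. g1 z + g2 z) \<subseteq> ?B" "gsupp g1 \<subseteq> ?B" "gsupp g2 \<subseteq> ?B"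
    by (auto simp: gsupp_def)
  show "conv G f (\<lambda>z. g1 z + g2 z) z = conv G f g1 z + conv G f g2 z"
    using fin s
    by (simp add: conv_superset[of ?A ?B] sum.distrib[symmetric] algebra_simps)
qed

lemma conv_sub_right:
  assumes "ga G f" "ga G g1" "ga G g2"
  shows "conv G f (\<lambda>z. g1 z - g2 z) = (\<lambda>z. conv G f g1 z - conv G f g2 z)"
proof
  fix z
  let ?A = "gsupp f" and ?B = "gsupp g1 \<union> gsupp g2"
  have fin: "finite ?A" "finite ?B" using assms by (auto simp: ga_def)
  have s: "gsupp (\<lambda>z. g1 z - g2 z) \<subseteq> ?B" "gsupp g1 \<subseteq> ?B" "gsupp g2 \<subseteq> ?B"
    by (auto simp: gsupp_def)
  show "conv G f (\<lambda>z. g1 z - g2 z) z = conv G f g1 z - conv G f g2 z"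
    using fin s
    by (simp add: conv_superset[of ?A ?B] sum_subtractf[symmetric] algebra_simps)
qed

lemma conv_add_left:
  assumes "ga G f1" "ga G f2" "ga G g"
  shows "conv G (\<lambda>z. f1 z + f2 z) g = (\<lambda>z. conv G f1 g z + conv G f2 g z)"
proof
  fix z
  let ?A = "gsupp f1 \<union> gsupp f2" and ?B = "gsupp g"
  have fin: "finite ?A" "finite ?B" using assms by (auto simp: ga_def)
  have s: "gsupp (\<lambda>z. f1 z + f2 z) \<subseteq> ?A" "gsupp f1 \<subseteq> ?A" "gsupp f2 \<subseteq> ?A"
    by (auto simp: gsupp_def)
  show "conv G (\<lambda>z. f1 z + f2 z) g z = conv G f1 g z + conv G f2 g z"
    using fin s
    by (simp add: conv_superset[of ?A ?B] sum.distrib[symmetric] algebra_simps)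
qed

lemma conv_sub_left:
  assumes "ga G f1" "ga G f2" "ga G g"
  shows "conv G (\<lambda>z. f1 z - f2 z) g = (\<lambda>z. conv G f1 g z - conv G f2 g z)"
proof
  fix z
  let ?A = "gsupp f1 \<union> gsupp f2" and ?B = "gsupp g"
  have fin: "finite ?A" "finite ?B" using assms by (auto simp: ga_def)
  have s: "gsupp (\<lambda>z. f1 z - f2 z) \<subseteq> ?A" "gsupp f1 \<subseteq> ?A" "gsupp f2 \<subseteq> ?A"
    by (auto simp: gsupp_def)
  show "conv G (\<lambda>z. f1 z - f2 z) g z = conv G f1 g z - conv G f2 g z"
    using fin s
    by (simp add: conv_superset[of ?A ?B] sum_subtractf[symmetric] algebra_simps)
qed

lemma conv_zero_left: "conv G (\<lambda>_. 0) g = (\<lambda>_. 0)"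
  by (simp add: conv_def fun_eq_iff)

lemma conv_zero_right: "conv G f (\<lambda>_. 0) = (\<lambda>_. 0)"
  by (simp add: conv_def fun_eq_iff)

lemma conv_delta_delta: "conv G (delta a) (delta b) = delta (a \<otimes>\<^bsub>G\<^esub> b)"
proof
  fix z
  show "conv G (delta a) (delta b) z = delta (a \<otimes>\<^bsub>G\<^esub> b) z"
    by (simp add: conv_superset[of "{a}" "{b}"] gsupp_delta) (simp add: delta_def)
qed

lemma conv_sum_left:
  assumes "finite K" "\<And>k. k \<in> K \<Longrightarrow> ga G (F k)" "ga G g"
  shows "conv G (\<lambda>z. \<Sum>k\<in>K. F k z) g = (\<lambda>z. \<Sum>k\<in>K. conv G (F k) g z)"
  using assms
proof (induction K rule: finite_induct)
  case empty then show ?case by (simp add: conv_zero_left)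
next
  case (insert k K)
  have "conv G (\<lambda>z. \<Sum>k\<in>insert k K. F k z) g = conv G (\<lambda>z. F k z + (\<Sum>k\<in>K. F k z)) g"
    using insert by simp
  also have "\<dots> = (\<lambda>z. conv G (F k) g z + conv G (\<lambda>z. \<Sum>k\<in>K. F k z) g z)"
    using insert by (intro conv_add_left[of G "F k" "\<lambda>z. \<Sum>k\<in>K. F k z", simplified]) (auto intro: ga_sum)
  finally show ?case using insert by simp
qed

lemma conv_sum_right:
  assumes "finite K" "\<And>k. k \<in> K \<Longrightarrow> ga G (F k)" "ga G f"
  shows "conv G f (\<lambda>z. \<Sum>k\<in>K. F k z) = (\<lambda>z. \<Sum>k\<in>K. conv G f (F k) z)"
  using assms
proof (induction K rule: finite_induct)
  case empty then show ?case by (simp add: conv_zero_right)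
next
  case (insert k K)
  have "conv G f (\<lambda>z. \<Sum>k\<in>insert k K. F k z) = conv G f (\<lambda>z. F k z + (\<Sum>k\<in>K. F k z))"
    using insert by simp
  also have "\<dots> = (\<lambda>z. conv G f (F k) z + conv G f (\<lambda>z. \<Sum>k\<in>K. F k z) z)"
    using insert by (intro conv_add_right[of G f "F k" "\<lambda>z. \<Sum>k\<in>K. F k z", simplified]) (auto intro: ga_sum)
  finally show ?case using insert by simp
qed

lemma sum_delta_collapse:
  fixes X :: "'g \<Rightarrow> complex"
  assumes "finite W" "t \<in> W"
  shows "(\<Sum>w\<in>W. delta t w * X w) = X t"
proof -
  have "(\<Sum>w\<in>W. delta t w * X w) = (\<Sum>w\<in>W. if w = t then X w else 0)"
    by (intro sum.cong) (auto simp: delta_def)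
  also have "\<dots> = X t" using assms by (simp add: sum.delta')
  finally show ?thesis .
qed

lemma conv_one_left:
  assumes G: "monoid G" and f: "ga G f"
  shows "conv G (delta \<one>\<^bsub>G\<^esub>) f = f"
proof
  fix z
  have fin: "finite (gsupp f)" and sub: "gsupp f \<subseteq> carrier G" using f by (auto simp: ga_def)
  have "conv G (delta \<one>\<^bsub>G\<^esub>) f z = (\<Sum>x\<in>{\<one>\<^bsub>G\<^esub>}. \<Sum>y\<in>gsupp f. delta \<one>\<^bsub>G\<^esub> x * f y * delta (x \<otimes>\<^bsub>G\<^esub> y) z)"
    using fin by (intro conv_superset) (auto simp: gsupp_delta)
  also have "\<dots> = (\<Sum>y\<in>gsupp f. f y * delta y z)"
  proof -
    have l: "\<And>y. y \<in> gsupp f \<Longrightarrow> \<one>\<^bsub>G\<^esub> \<otimes>\<^bsub>G\<^esub> y = y"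
      using sub monoid.l_one[OF G] by blast
    show ?thesis by (simp add: l delta_def cong: sum.cong)
  qed
  also have "\<dots> = f z"
  proof (cases "z \<in> gsupp f")
    case True
    have "(\<Sum>y\<in>gsupp f. f y * delta y z) = (\<Sum>y\<in>gsupp f. if z = y then f y else 0)"
      by (intro sum.cong) (auto simp: delta_def)
    then show ?thesis using fin True by (simp add: sum.delta')
  next
    case False
    then have "f z = 0" by (simp add: gsupp_def)
    moreover have "(\<Sum>y\<in>gsupp f. f y * delta y z) = 0"
      using False by (intro sum.neutral) (auto simp: delta_def)
    ultimately show ?thesis by simp
  qed
  finally show "conv G (delta \<one>\<^bsub>G\<^esub>) f z = f z" .
qed

lemma conv_one_right:
  assumes G: "monoid G" and f: "ga G f"
  shows "conv G f (delta \<one>\<^bsub>G\<^esub>) = f"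
proof
  fix z
  have fin: "finite (gsupp f)" and sub: "gsupp f \<subseteq> carrier G" using f by (auto simp: ga_def)
  have "conv G f (delta \<one>\<^bsub>G\<^esub>) z = (\<Sum>y\<in>gsupp f. \<Sum>x\<in>{\<one>\<^bsub>G\<^esub>}. f y * delta \<one>\<^bsub>G\<^esub> x * delta (y \<otimes>\<^bsub>G\<^esub> x) z)"
    using fin by (intro conv_superset) (auto simp: gsupp_delta)
  also have "\<dots> = (\<Sum>y\<in>gsupp f. f y * delta y z)"
  proof -
    have l: "\<And>y. y \<in> gsupp f \<Longrightarrow> y \<otimes>\<^bsub>G\<^esub> \<one>\<^bsub>G\<^esub> = y"
      using sub monoid.r_one[OF G] by blast
    show ?thesis by (simp add: l delta_def cong: sum.cong)
  qed
  also have "\<dots> = f z"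
  proof (cases "z \<in> gsupp f")
    case True
    have "(\<Sum>y\<in>gsupp f. f y * delta y z) = (\<Sum>y\<in>gsupp f. if z = y then f y else 0)"
      by (intro sum.cong) (auto simp: delta_def)
    then show ?thesis using fin True by (simp add: sum.delta')
  next
    case False
    then have "f z = 0" by (simp add: gsupp_def)
    moreover have "(\<Sum>y\<in>gsupp f. f y * delta y z) = 0"
      using False by (intro sum.neutral) (auto simp: delta_def)
    ultimately show ?thesis by simp
  qed
  finally show "conv G f (delta \<one>\<^bsub>G\<^esub>) z = f z" .
qed

lemma sum_collapse2:
  fixes F :: "'a \<Rightarrow> 'b \<Rightarrow> complex" and K :: "'g \<Rightarrow> complex"
  assumes "finite W" "\<And>a b. a \<in> A \<Longrightarrow> b \<in> B \<Longrightarrow> m a b \<in> W"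
  shows "(\<Sum>w\<in>W. (\<Sum>a\<in>A. \<Sum>b\<in>B. F a b * delta (m a b) w) * K w) = (\<Sum>a\<in>A. \<Sum>b\<in>B. F a b * K (m a b))"
proof -
  have "(\<Sum>w\<in>W. (\<Sum>a\<in>A. \<Sum>b\<in>B. F a b * delta (m a b) w) * K w)
      = (\<Sum>w\<in>W. \<Sum>a\<in>A. \<Sum>b\<in>B. F a b * (delta (m a b) w * K w))"
    by (simp add: sum_distrib_right mult.assoc)
  also have "\<dots> = (\<Sum>a\<in>A. \<Sum>w\<in>W. \<Sum>b\<in>B. F a b * (delta (m a b) w * K w))"
    by (rule sum.swap)
  also have "\<dots> = (\<Sum>a\<in>A. \<Sum>b\<in>B. \<Sum>w\<in>W. F a b * (delta (m a b) w * K w))"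
    by (rule sum.cong[OF refl], rule sum.swap)
  also have "\<dots> = (\<Sum>a\<in>A. \<Sum>b\<in>B. F a b * K (m a b))"
    using assms by (auto simp: sum_distrib_left[symmetric] sum_delta_collapse intro!: sum.cong)
  finally show ?thesis .
qed

lemma conv_assoc:
  assumes G: "monoid G" and f: "ga G f" and g: "ga G g" and h: "ga G h"
  shows "conv G (conv G f g) h = conv G f (conv G g h)"
proof
  fix z
  let ?A = "gsupp f" and ?B = "gsupp g" and ?C = "gsupp h"
  let ?AB = "(\<lambda>p. fst p \<otimes>\<^bsub>G\<^esub> snd p) ` (?A \<times> ?B)"
  let ?BC = "(\<lambda>p. fst p \<otimes>\<^bsub>G\<^esub> snd p) ` (?B \<times> ?C)"
  have fin: "finite ?A" "finite ?B" "finite ?C" "finite ?AB" "finite ?BC"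
    using f g h by (auto simp: ga_def)
  have car: "?A \<subseteq> carrier G" "?B \<subseteq> carrier G" "?C \<subseteq> carrier G"
    using f g h by (auto simp: ga_def)
  have "conv G (conv G f g) h z =
      (\<Sum>w\<in>?AB. \<Sum>c\<in>?C. conv G f g w * h c * delta (w \<otimes>\<^bsub>G\<^esub> c) z)"
    using fin gsupp_conv[of G f g] by (intro conv_superset) auto
  also have "\<dots> = (\<Sum>w\<in>?AB. (\<Sum>a\<in>?A. \<Sum>b\<in>?B. (f a * g b) * delta (a \<otimes>\<^bsub>G\<^esub> b) w) *
                      (\<Sum>c\<in>?C. h c * delta (w \<otimes>\<^bsub>G\<^esub> c) z))"
    using fin by (simp add: conv_superset[of ?A ?B] sum_distrib_left mult.assoc)
  also have "\<dots> = (\<Sum>a\<in>?A. \<Sum>b\<in>?B. (f a * g b) * (\<Sum>c\<in>?C. h c * delta ((a \<otimes>\<^bsub>G\<^esub> b) \<otimes>\<^bsub>G\<^esub> c) z))"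
    using fin by (intro sum_collapse2) (auto simp: image_iff intro!: bexI[of _ "(a, b)" for a b])
  also have "\<dots> = (\<Sum>a\<in>?A. f a * (\<Sum>b\<in>?B. \<Sum>c\<in>?C. (g b * h c) * delta (a \<otimes>\<^bsub>G\<^esub> (b \<otimes>\<^bsub>G\<^esub> c)) z))"
  proof -
    have "\<And>a b c. a \<in> ?A \<Longrightarrow> b \<in> ?B \<Longrightarrow> c \<in> ?C \<Longrightarrow> (a \<otimes>\<^bsub>G\<^esub> b) \<otimes>\<^bsub>G\<^esub> c = a \<otimes>\<^bsub>G\<^esub> (b \<otimes>\<^bsub>G\<^esub> c)"
      using car monoid.m_assoc[OF G] by blast
    then show ?thesis by (simp add: sum_distrib_left mult_ac cong: sum.cong)
  qed
  also have "\<dots> = (\<Sum>a\<in>?A. f a * (\<Sum>v\<in>?BC. (\<Sum>b\<in>?B. \<Sum>c\<in>?C. (g b * h c) * delta (b \<otimes>\<^bsub>G\<^esub> c) v) * delta (a \<otimes>\<^bsub>G\<^esub> v) z))"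
    using fin by (subst sum_collapse2) (auto simp: image_iff intro!: bexI[of _ "(a, b)" for a b])
  also have "\<dots> = (\<Sum>a\<in>?A. \<Sum>v\<in>?BC. f a * ((\<Sum>b\<in>?B. \<Sum>c\<in>?C. (g b * h c) * delta (b \<otimes>\<^bsub>G\<^esub> c) v) * delta (a \<otimes>\<^bsub>G\<^esub> v) z))"
    by (simp only: sum_distrib_left)
  also have "\<dots> = (\<Sum>a\<in>?A. \<Sum>v\<in>?BC. f a * conv G g h v * delta (a \<otimes>\<^bsub>G\<^esub> v) z)"
    using fin by (simp add: conv_superset[of ?B ?C] mult.assoc)
  also have "\<dots> = conv G f (conv G g h) z"
    using fin gsupp_conv[of G g h] by (intro conv_superset[symmetric]) auto
  finally show "conv G (conv G f g) h z = conv G f (conv G g h) z" .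
qed

section \<open>Matrices\<close>

lemma is_mat_ga: "is_mat G n A \<longleftrightarrow> (\<forall>i j. (i \<notin> {1..n} \<or> j \<notin> {1..n}) \<longrightarrow> A i j = (\<lambda>_. 0))
                     \<and> (\<forall>i j. ga G (A i j))"
  by (simp add: is_mat_def ga_iga)

lemma mat_mult_in: "i \<in> {1..n} \<Longrightarrow> j \<in> {1..n} \<Longrightarrow>
   mat_mult G n A B i j = (\<lambda>z. \<Sum>k\<in>{1..n}. conv G (A i k) (B k j) z)"
  by (simp add: mat_mult_def)

lemma mat_mult_out: "i \<notin> {1..n} \<or> j \<notin> {1..n} \<Longrightarrow> mat_mult G n A B i j = (\<lambda>_. 0)"
  by (auto simp: mat_mult_def)

lemma ga_mat_mult:
  assumes G: "monoid G" and A: "\<And>i j. ga G (A i j)" and B: "\<And>i j. ga G (B i j)"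
  shows "ga G (mat_mult G n A B i j)"
  unfolding mat_mult_def
  using ga_sum[of "{1..n}" G "\<lambda>k. conv G (A i k) (B k j)"] ga_conv[OF G A B] ga_zero
  by auto

lemma is_mat_mult:
  assumes G: "monoid G" and "is_mat G n A" "is_mat G n B"
  shows "is_mat G n (mat_mult G n A B)"
  using assms ga_mat_mult[OF G] unfolding is_mat_ga by (auto simp: mat_mult_out)

lemma mat_mult_assoc:
  assumes G: "monoid G" and A: "is_mat G n A" and B: "is_mat G n B" and C: "is_mat G n C"
  shows "mat_mult G n (mat_mult G n A B) C = mat_mult G n A (mat_mult G n B C)"
proof (intro ext)
  fix i j z
  have gA: "\<And>i j. ga G (A i j)" and gB: "\<And>i j. ga G (B i j)" and gC: "\<And>i j. ga G (C i j)"
    using A B C by (auto simp: is_mat_ga)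
  show "mat_mult G n (mat_mult G n A B) C i j z = mat_mult G n A (mat_mult G n B C) i j z"
  proof (cases "i \<in> {1..n} \<and> j \<in> {1..n}")
    case False then show ?thesis by (auto simp: mat_mult_out)
  next
    case True
    then have i: "i \<in> {1..n}" and j: "j \<in> {1..n}" by auto
    have "mat_mult G n (mat_mult G n A B) C i j z
        = (\<Sum>k\<in>{1..n}. conv G (\<lambda>z. \<Sum>l\<in>{1..n}. conv G (A i l) (B l k) z) (C k j) z)"
      unfolding mat_mult_in[OF i j] by (intro sum.cong refl) (simp add: mat_mult_in[OF i])
    also have "\<dots> = (\<Sum>k\<in>{1..n}. \<Sum>l\<in>{1..n}. conv G (conv G (A i l) (B l k)) (C k j) z)"
      by (intro sum.cong refl, subst conv_sum_left) (auto intro: ga_conv[OF G gA gB] gC)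
    also have "\<dots> = (\<Sum>k\<in>{1..n}. \<Sum>l\<in>{1..n}. conv G (A i l) (conv G (B l k) (C k j)) z)"
      by (intro sum.cong refl) (simp add: conv_assoc[OF G gA gB gC])
    also have "\<dots> = (\<Sum>l\<in>{1..n}. \<Sum>k\<in>{1..n}. conv G (A i l) (conv G (B l k) (C k j)) z)"
      by (rule sum.swap)
    also have "\<dots> = (\<Sum>l\<in>{1..n}. conv G (A i l) (\<lambda>z. \<Sum>k\<in>{1..n}. conv G (B l k) (C k j) z) z)"
      by (intro sum.cong refl, subst conv_sum_right) (auto intro: ga_conv[OF G gB gC] gA)
    also have "\<dots> = mat_mult G n A (mat_mult G n B C) i j z"
      unfolding mat_mult_in[OF i j] by (intro sum.cong refl) (simp add: mat_mult_in[OF _ j])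
    finally show ?thesis .
  qed
qed

lemma mat_one_in: "i \<in> {1..n} \<Longrightarrow> j \<in> {1..n} \<Longrightarrow>
   mat_one G n i j = (if i = j then delta \<one>\<^bsub>G\<^esub> else (\<lambda>_. 0))"
  by (simp add: mat_one_def)

lemma is_mat_one: "monoid G \<Longrightarrow> is_mat G n (mat_one G n)"
  unfolding is_mat_ga mat_one_def by (auto intro: ga_delta ga_zero monoid.one_closed)

lemma mat_one_left:
  assumes G: "monoid G" and A: "is_mat G n A"
  shows "mat_mult G n (mat_one G n) A = A"
proof (intro ext)
  fix i j z
  have gA: "\<And>i j. ga G (A i j)" using A by (auto simp: is_mat_ga)
  show "mat_mult G n (mat_one G n) A i j z = A i j z"
  proof (cases "i \<in> {1..n} \<and> j \<in> {1..n}")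
    case False then show ?thesis using A by (auto simp: mat_mult_out is_mat_ga)
  next
    case True
    then have i: "i \<in> {1..n}" and j: "j \<in> {1..n}" by auto
    have "mat_mult G n (mat_one G n) A i j z = (\<Sum>k\<in>{1..n}. conv G (mat_one G n i k) (A k j) z)"
      using i j by (simp add: mat_mult_in)
    also have "\<dots> = (\<Sum>k\<in>{1..n}. if k = i then A i j z else 0)"
      using i by (intro sum.cong refl) (auto simp: mat_one_in conv_zero_left conv_one_left[OF G gA])
    also have "\<dots> = A i j z" using i by (simp add: sum.delta)
    finally show ?thesis .
  qed
qed

lemma mat_one_right:
  assumes G: "monoid G" and A: "is_mat G n A"
  shows "mat_mult G n A (mat_one G n) = A"
proof (intro ext)
  fix i j z
  have gA: "\<And>i j. ga G (A i j)" using A by (auto simp: is_mat_ga)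
  show "mat_mult G n A (mat_one G n) i j z = A i j z"
  proof (cases "i \<in> {1..n} \<and> j \<in> {1..n}")
    case False then show ?thesis using A by (auto simp: mat_mult_out is_mat_ga)
  next
    case True
    then have i: "i \<in> {1..n}" and j: "j \<in> {1..n}" by auto
    have "mat_mult G n A (mat_one G n) i j z = (\<Sum>k\<in>{1..n}. conv G (A i k) (mat_one G n k j) z)"
      using i j by (simp add: mat_mult_in)
    also have "\<dots> = (\<Sum>k\<in>{1..n}. if k = j then A i j z else 0)"
      using j by (intro sum.cong refl) (auto simp: mat_one_in conv_zero_right conv_one_right[OF G gA])
    also have "\<dots> = A i j z" using j by (simp add: sum.delta)
    finally show ?thesis .
  qed
qed

lemma GL_monoid:
  assumes G: "monoid G"
  shows "monoid (GL G n)"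
proof (rule monoidI)
  fix x y assume x: "x \<in> carrier (GL G n)" and y: "y \<in> carrier (GL G n)"
  then obtain x' y' where x': "is_mat G n x'" "mat_mult G n x x' = mat_one G n" "mat_mult G n x' x = mat_one G n"
    and y': "is_mat G n y'" "mat_mult G n y y' = mat_one G n" "mat_mult G n y' y = mat_one G n"
    and xm: "is_mat G n x" and ym: "is_mat G n y"
    by (auto simp: GL_def)
  have "mat_mult G n (mat_mult G n x y) (mat_mult G n y' x') = mat_one G n"
    using x' y' xm ym G
    by (simp add: mat_mult_assoc is_mat_mult) (simp add: mat_mult_assoc[symmetric] is_mat_mult mat_one_left)
  moreover have "mat_mult G n (mat_mult G n y' x') (mat_mult G n x y) = mat_one G n"
    using x' y' xm ym G
    by (simp add: mat_mult_assoc is_mat_mult) (simp add: mat_mult_assoc[symmetric] is_mat_mult mat_one_left)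
  ultimately show "x \<otimes>\<^bsub>GL G n\<^esub> y \<in> carrier (GL G n)"
    using x' y' xm ym G by (auto simp: GL_def is_mat_mult intro!: exI[of _ "mat_mult G n y' x'"])
next
  show "\<one>\<^bsub>GL G n\<^esub> \<in> carrier (GL G n)"
    using G by (auto simp: GL_def is_mat_one mat_one_left intro!: exI[of _ "mat_one G n"])
next
  fix x y z assume "x \<in> carrier (GL G n)" "y \<in> carrier (GL G n)" "z \<in> carrier (GL G n)"
  then show "x \<otimes>\<^bsub>GL G n\<^esub> y \<otimes>\<^bsub>GL G n\<^esub> z = x \<otimes>\<^bsub>GL G n\<^esub> (y \<otimes>\<^bsub>GL G n\<^esub> z)"
    using G by (simp add: GL_def mat_mult_assoc)
next
  fix x assume "x \<in> carrier (GL G n)"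
  then show "\<one>\<^bsub>GL G n\<^esub> \<otimes>\<^bsub>GL G n\<^esub> x = x" using G by (simp add: GL_def mat_one_left)
next
  fix x assume "x \<in> carrier (GL G n)"
  then show "x \<otimes>\<^bsub>GL G n\<^esub> \<one>\<^bsub>GL G n\<^esub> = x" using G by (simp add: GL_def mat_one_right)
qed

context group
begin

lemma cancel_l1 [simp]: "x \<in> carrier G \<Longrightarrow> y \<in> carrier G \<Longrightarrow> x \<otimes> (inv x \<otimes> y) = y"
  by (simp add: m_assoc[symmetric])

lemma cancel_l2 [simp]: "x \<in> carrier G \<Longrightarrow> y \<in> carrier G \<Longrightarrow> inv x \<otimes> (x \<otimes> y) = y"
  by (simp add: m_assoc[symmetric])

lemma solve_l: "x \<in> carrier G \<Longrightarrow> y \<in> carrier G \<Longrightarrow> z \<in> carrier G \<Longrightarrow> inv x \<otimes> y = z \<Longrightarrow> y = x \<otimes> z"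
  by (metis cancel_l1 m_closed inv_closed)

lemma gl1:
  assumes a: "a \<in> carrier G" and b: "b \<in> carrier G" and h: "inv a \<otimes> (b \<otimes> (a \<otimes> (inv b \<otimes> \<one>))) = \<one>"
  shows "b \<otimes> a = a \<otimes> b"
proof -
  have "b \<otimes> (a \<otimes> inv b) = a \<otimes> \<one>" using solve_l[OF a _ _ h] a b by simp
  then have "(b \<otimes> (a \<otimes> inv b)) \<otimes> b = a \<otimes> b" using a b by simp
  then show ?thesis using a b by (simp add: m_assoc)
qed

lemma gl2:
  assumes a: "a \<in> carrier G" and b: "b \<in> carrier G" and c: "c \<in> carrier G"
    and h: "inv a \<otimes> (b \<otimes> (a \<otimes> (c \<otimes> (inv b \<otimes> (inv c \<otimes> \<one>))))) = \<one>"
  shows "b \<otimes> a = a \<otimes> (c \<otimes> (b \<otimes> inv c))"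
proof -
  have "b \<otimes> (a \<otimes> (c \<otimes> (inv b \<otimes> inv c))) = a \<otimes> \<one>" using solve_l[OF a _ _ h] a b c by simp
  then have "(b \<otimes> (a \<otimes> (c \<otimes> (inv b \<otimes> inv c)))) \<otimes> (c \<otimes> (b \<otimes> inv c)) = a \<otimes> (c \<otimes> (b \<otimes> inv c))"
    using a b c by simp
  then show ?thesis using a b c by (simp add: m_assoc)
qed

lemma gl3:
  assumes a: "a \<in> carrier G" and b: "b \<in> carrier G" and h: "inv a \<otimes> (inv b \<otimes> (a \<otimes> (b \<otimes> \<one>))) = \<one>"
  shows "a \<otimes> b = b \<otimes> a"
proof -
  have "inv b \<otimes> (a \<otimes> b) = a \<otimes> \<one>" using solve_l[OF a _ _ h] a b by simp
  then have "b \<otimes> (inv b \<otimes> (a \<otimes> b)) = b \<otimes> a" using a b by simp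
  then show ?thesis using a b by simp
qed

lemma gl4:
  assumes a: "a \<in> carrier G" and b: "b \<in> carrier G" and c: "c \<in> carrier G"
    and h: "inv b \<otimes> (inv a \<otimes> (inv c \<otimes> (a \<otimes> (b \<otimes> (c \<otimes> \<one>))))) = \<one>"
  shows "a \<otimes> (b \<otimes> c) = c \<otimes> (a \<otimes> b)"
proof -
  have "inv a \<otimes> (inv c \<otimes> (a \<otimes> (b \<otimes> c))) = b \<otimes> \<one>" using solve_l[OF b _ _ h] a b c by simp
  then have "a \<otimes> (inv a \<otimes> (inv c \<otimes> (a \<otimes> (b \<otimes> c)))) = a \<otimes> b" using a b c by simp
  then have "inv c \<otimes> (a \<otimes> (b \<otimes> c)) = a \<otimes> b" using a b c by simp
  then have "c \<otimes> (inv c \<otimes> (a \<otimes> (b \<otimes> c))) = c \<otimes> (a \<otimes> b)" using a b c by simp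
  then show ?thesis using a b c by simp
qed

end

lemma SD_group: "group (SD n)"
  unfolding SD_def by (rule presented_group_is_group)

lemma x_carrier: "k \<in> {1..n} \<Longrightarrow> x_el n k \<in> carrier (SD n)"
  unfolding x_el_def SD_def by (rule gen_class_carrier) (auto simp: SD_gens_def)

lemma xi_carrier: "(i, j) \<in> pw_gens n \<Longrightarrow> xi_el n i j \<in> carrier (SD n)"
  unfolding xi_el_def SD_def by (rule gen_class_carrier) (auto simp: SD_gens_def)

lemma SD_relator:
  assumes "r \<in> SD_rels n" "set r \<subseteq> SD_gens n \<times> UNIV"
  shows "geval (SD_rels n) (SD_gens n) r = \<one>\<^bsub>SD n\<^esub>"
  using relator_geval[OF assms] by (simp add: SD_def)

lemma geval_Cons: "geval R S ((a, b) # w) =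
   (if b then gen_class R a else inv\<^bsub>presented_group S R\<^esub> gen_class R a) \<otimes>\<^bsub>presented_group S R\<^esub> geval R S w"
  by (simp add: geval_def)

lemma geval_Nil: "geval R S [] = \<one>\<^bsub>presented_group S R\<^esub>"
  by (simp add: geval_def)

lemmas geval_SD = geval_Cons[where R="SD_rels n" and S="SD_gens n" for n, folded SD_def x_el_def xi_el_def]
  geval_Nil[where R="SD_rels n" and S="SD_gens n" for n, folded SD_def]

lemma pw_gens_iff: "(i, j) \<in> pw_gens n \<longleftrightarrow> i \<in> {1..n} \<and> j \<in> {1..n} \<and> i \<noteq> j"
  by (simp add: pw_gens_def)

lemma xcomm:
  assumes ij: "(i, j) \<in> pw_gens n" and k: "k \<in> {1..n}" "k \<noteq> i"
  shows "x_el n k \<otimes>\<^bsub>SD n\<^esub> xi_el n i j = xi_el n i j \<otimes>\<^bsub>SD n\<^esub> x_el n k"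
proof -
  interpret group "SD n" by (rule SD_group)
  let ?r = "[(Xi i j, False), (X k, True), (Xi i j, True), (X k, False)]"
  have "?r \<in> SD_rels n" using ij k unfolding SD_rels_def by blast
  moreover have "set ?r \<subseteq> SD_gens n \<times> UNIV" using ij k by (auto simp: SD_gens_def)
  ultimately have "geval (SD_rels n) (SD_gens n) ?r = \<one>\<^bsub>SD n\<^esub>" by (rule SD_relator)
  then have "inv\<^bsub>SD n\<^esub> xi_el n i j \<otimes>\<^bsub>SD n\<^esub> (x_el n k \<otimes>\<^bsub>SD n\<^esub> (xi_el n i j \<otimes>\<^bsub>SD n\<^esub>
      (inv\<^bsub>SD n\<^esub> x_el n k \<otimes>\<^bsub>SD n\<^esub> \<one>\<^bsub>SD n\<^esub>))) = \<one>\<^bsub>SD n\<^esub>"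
    by (simp add: geval_SD xi_el_def[symmetric] x_el_def[symmetric])
  then show ?thesis using gl1 xi_carrier[OF ij] x_carrier[OF k(1)] by blast
qed

lemma xconj:
  assumes ij: "(i, j) \<in> pw_gens n"
  shows "x_el n i \<otimes>\<^bsub>SD n\<^esub> xi_el n i j = xi_el n i j \<otimes>\<^bsub>SD n\<^esub> (x_el n j \<otimes>\<^bsub>SD n\<^esub> (x_el n i \<otimes>\<^bsub>SD n\<^esub> inv\<^bsub>SD n\<^esub> x_el n j))"
proof -
  interpret group "SD n" by (rule SD_group)
  let ?r = "[(Xi i j, False), (X i, True), (Xi i j, True), (X j, True), (X i, False), (X j, False)]"
  have "?r \<in> SD_rels n" using ij unfolding SD_rels_def by blast
  moreover have "set ?r \<subseteq> SD_gens n \<times> UNIV" using ij by (auto simp: SD_gens_def pw_gens_def)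
  ultimately have "geval (SD_rels n) (SD_gens n) ?r = \<one>\<^bsub>SD n\<^esub>" by (rule SD_relator)
  then have "inv\<^bsub>SD n\<^esub> xi_el n i j \<otimes>\<^bsub>SD n\<^esub> (x_el n i \<otimes>\<^bsub>SD n\<^esub> (xi_el n i j \<otimes>\<^bsub>SD n\<^esub>
      (x_el n j \<otimes>\<^bsub>SD n\<^esub> (inv\<^bsub>SD n\<^esub> x_el n i \<otimes>\<^bsub>SD n\<^esub> (inv\<^bsub>SD n\<^esub> x_el n j \<otimes>\<^bsub>SD n\<^esub> \<one>\<^bsub>SD n\<^esub>))))) = \<one>\<^bsub>SD n\<^esub>"
    by (simp add: geval_SD xi_el_def[symmetric] x_el_def[symmetric])
  moreover have "x_el n i \<in> carrier (SD n)" "x_el n j \<in> carrier (SD n)"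
    using ij by (auto simp: pw_gens_def intro!: x_carrier)
  ultimately show ?thesis using gl2 xi_carrier[OF ij] by blast
qed

lemma xi_comm1:
  assumes ij: "(i, j) \<in> pw_gens n" and st: "(s, t) \<in> pw_gens n" and d: "{i, j} \<inter> {s, t} = {}"
  shows "xi_el n i j \<otimes>\<^bsub>SD n\<^esub> xi_el n s t = xi_el n s t \<otimes>\<^bsub>SD n\<^esub> xi_el n i j"
proof -
  interpret group "SD n" by (rule SD_group)
  let ?r = "comm_word [(Xi i j, True)] [(Xi s t, True)]"
  have "?r \<in> mccool_rels n id (\<lambda>(i, j). Xi i j)"
    unfolding mccool_rels_def Let_def
    by (rule UnI1, rule UnI1, rule CollectI, rule exI[of _ i], rule exI[of _ j], rule exI[of _ s],
        rule exI[of _ t]) (use ij st d in simp)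
  then have "?r \<in> SD_rels n" unfolding SD_rels_def by blast
  moreover have "set ?r \<subseteq> SD_gens n \<times> UNIV" using ij st by (auto simp: SD_gens_def comm_word_def)
  ultimately have "geval (SD_rels n) (SD_gens n) ?r = \<one>\<^bsub>SD n\<^esub>" by (rule SD_relator)
  then have "inv\<^bsub>SD n\<^esub> xi_el n i j \<otimes>\<^bsub>SD n\<^esub> (inv\<^bsub>SD n\<^esub> xi_el n s t \<otimes>\<^bsub>SD n\<^esub> (xi_el n i j \<otimes>\<^bsub>SD n\<^esub>
      (xi_el n s t \<otimes>\<^bsub>SD n\<^esub> \<one>\<^bsub>SD n\<^esub>))) = \<one>\<^bsub>SD n\<^esub>"
    by (simp add: geval_SD comm_word_def xi_el_def[symmetric] x_el_def[symmetric])
  then show ?thesis using gl3 xi_carrier[OF ij] xi_carrier[OF st] by blast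
qed

lemma xi_comm2:
  assumes "i \<in> {1..n}" "j \<in> {1..n}" "k \<in> {1..n}" "i \<noteq> j" "j \<noteq> k" "i \<noteq> k"
  shows "xi_el n i j \<otimes>\<^bsub>SD n\<^esub> xi_el n k j = xi_el n k j \<otimes>\<^bsub>SD n\<^esub> xi_el n i j"
proof -
  interpret group "SD n" by (rule SD_group)
  have ij: "(i, j) \<in> pw_gens n" and kj: "(k, j) \<in> pw_gens n" using assms by (auto simp: pw_gens_def)
  let ?r = "comm_word [(Xi i j, True)] [(Xi k j, True)]"
  have "?r \<in> mccool_rels n id (\<lambda>(i, j). Xi i j)"
    unfolding mccool_rels_def Let_def
    by (rule UnI1, rule UnI2, rule CollectI, rule exI[of _ i], rule exI[of _ j], rule exI[of _ k])
       (use assms in simp)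
  then have "?r \<in> SD_rels n" unfolding SD_rels_def by blast
  moreover have "set ?r \<subseteq> SD_gens n \<times> UNIV" using ij kj by (auto simp: SD_gens_def comm_word_def)
  ultimately have "geval (SD_rels n) (SD_gens n) ?r = \<one>\<^bsub>SD n\<^esub>" by (rule SD_relator)
  then have "inv\<^bsub>SD n\<^esub> xi_el n i j \<otimes>\<^bsub>SD n\<^esub> (inv\<^bsub>SD n\<^esub> xi_el n k j \<otimes>\<^bsub>SD n\<^esub> (xi_el n i j \<otimes>\<^bsub>SD n\<^esub>
      (xi_el n k j \<otimes>\<^bsub>SD n\<^esub> \<one>\<^bsub>SD n\<^esub>))) = \<one>\<^bsub>SD n\<^esub>"
    by (simp add: geval_SD comm_word_def xi_el_def[symmetric] x_el_def[symmetric])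
  then show ?thesis using gl3 xi_carrier[OF ij] xi_carrier[OF kj] by blast
qed

lemma xi_comm3:
  assumes "i \<in> {1..n}" "j \<in> {1..n}" "k \<in> {1..n}" "i \<noteq> j" "j \<noteq> k" "i \<noteq> k"
  shows "xi_el n i j \<otimes>\<^bsub>SD n\<^esub> (xi_el n k j \<otimes>\<^bsub>SD n\<^esub> xi_el n i k) = xi_el n i k \<otimes>\<^bsub>SD n\<^esub> (xi_el n i j \<otimes>\<^bsub>SD n\<^esub> xi_el n k j)"
proof -
  interpret group "SD n" by (rule SD_group)
  have ij: "(i, j) \<in> pw_gens n" and kj: "(k, j) \<in> pw_gens n" and ik: "(i, k) \<in> pw_gens n"
    using assms by (auto simp: pw_gens_def)
  let ?r = "comm_word [(Xi i j, True), (Xi k j, True)] [(Xi i k, True)]"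
  have "?r \<in> mccool_rels n id (\<lambda>(i, j). Xi i j)"
    unfolding mccool_rels_def Let_def
    by (rule UnI2, rule CollectI, rule exI[of _ i], rule exI[of _ j], rule exI[of _ k])
       (use assms in simp)
  then have "?r \<in> SD_rels n" unfolding SD_rels_def by blast
  moreover have "set ?r \<subseteq> SD_gens n \<times> UNIV" using ij kj ik by (auto simp: SD_gens_def comm_word_def)
  ultimately have "geval (SD_rels n) (SD_gens n) ?r = \<one>\<^bsub>SD n\<^esub>" by (rule SD_relator)
  then have "inv\<^bsub>SD n\<^esub> xi_el n k j \<otimes>\<^bsub>SD n\<^esub> (inv\<^bsub>SD n\<^esub> xi_el n i j \<otimes>\<^bsub>SD n\<^esub> (inv\<^bsub>SD n\<^esub> xi_el n i k \<otimes>\<^bsub>SD n\<^esub>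
      (xi_el n i j \<otimes>\<^bsub>SD n\<^esub> (xi_el n k j \<otimes>\<^bsub>SD n\<^esub> (xi_el n i k \<otimes>\<^bsub>SD n\<^esub> \<one>\<^bsub>SD n\<^esub>))))) = \<one>\<^bsub>SD n\<^esub>"
    by (simp add: geval_SD comm_word_def xi_el_def[symmetric] x_el_def[symmetric])
  then show ?thesis using gl4 xi_carrier[OF ij] xi_carrier[OF kj] xi_carrier[OF ik] by blast
qed

definition rowmat :: "nat \<Rightarrow> nat \<Rightarrow> nat \<Rightarrow> ('g \<Rightarrow> complex) \<Rightarrow> ('g \<Rightarrow> complex) \<Rightarrow> ('g \<Rightarrow> complex) \<Rightarrow> 'g gmat" where
  "rowmat n i j d e r = (\<lambda>a b. if a \<in> {1..n} \<and> b \<in> {1..n} then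
      (if a = i then (if b = i then d else if b = j then e else (\<lambda>_. 0))
       else if a = b then r else (\<lambda>_. 0)) else (\<lambda>_. 0))"

lemma is_mat_rowmat: "ga G d \<Longrightarrow> ga G e \<Longrightarrow> ga G r \<Longrightarrow> is_mat G n (rowmat n i j d e r)"
  unfolding is_mat_ga rowmat_def by (auto intro: ga_zero)

lemma mat_mult_rowmat:
  assumes s: "s \<in> {1..n}" and t: "t \<in> {1..n}" and st: "s \<noteq> t"
    and p: "p \<in> {1..n}" and q: "q \<in> {1..n}"
  shows "mat_mult G n A (rowmat n s t d e r) p q =
     (\<lambda>z. conv G (A p q) (if q = s then d else r) z + (if q = t then conv G (A p s) e z else 0))"
proof
  fix z
  let ?B = "rowmat n s t d e r"
  let ?f = "\<lambda>k. conv G (A p k) (?B k q) z"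
  have zero: "?f k = 0" if "k \<in> {1..n}" "k \<noteq> q" "\<not> (k = s \<and> q = t)" for k
    using that q by (auto simp: rowmat_def conv_zero_right)
  have "mat_mult G n A ?B p q z = sum ?f {1..n}" using p q by (simp add: mat_mult_in)
  also have "\<dots> = (if q = t then ?f q + ?f s else ?f q)"
  proof (cases "q = t")
    case True
    then have "sum ?f {1..n} = sum ?f {q, s}"
      using s q zero by (intro sum.mono_neutral_right) auto
    then show ?thesis using True st by simp
  next
    case False
    then have "sum ?f {1..n} = sum ?f {q}"
      using q zero by (intro sum.mono_neutral_right) auto
    then show ?thesis using False by simp
  qed
  also have "\<dots> = conv G (A p q) (if q = s then d else r) z + (if q = t then conv G (A p s) e z else 0)"
    using q s t st by (auto simp: rowmat_def)
  finally show "mat_mult G n A ?B p q z = conv G (A p q) (if q = s then d else r) z + (if q = t then conv G (A p s) e z else 0)" .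
qed

section \<open>The matrices C and their inverses\<close>


definition wel :: "nat \<Rightarrow> nat \<Rightarrow> nat \<Rightarrow> sgen word set" where
  "wel n i j = x_el n j \<otimes>\<^bsub>SD n\<^esub> (x_el n i \<otimes>\<^bsub>SD n\<^esub> inv\<^bsub>SD n\<^esub> x_el n j)"

definition Cinv :: "nat \<Rightarrow> nat \<Rightarrow> nat \<Rightarrow> sgen word set gmat" where
  "Cinv n i j = rowmat n i j
     (delta (inv\<^bsub>SD n\<^esub> x_el n j \<otimes>\<^bsub>SD n\<^esub> inv\<^bsub>SD n\<^esub> xi_el n i j))
     (\<lambda>z. delta (x_el n i \<otimes>\<^bsub>SD n\<^esub> (inv\<^bsub>SD n\<^esub> x_el n j \<otimes>\<^bsub>SD n\<^esub> inv\<^bsub>SD n\<^esub> xi_el n i j)) z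
          - delta (inv\<^bsub>SD n\<^esub> x_el n j \<otimes>\<^bsub>SD n\<^esub> inv\<^bsub>SD n\<^esub> xi_el n i j) z)
     (delta (inv\<^bsub>SD n\<^esub> xi_el n i j))"

lemma conv_rowmat: "conv G f (rowmat n i j d e r a b) = rowmat n i j (conv G f d) (conv G f e) (conv G f r) a b"
  unfolding rowmat_def by (simp only: if_distrib[of "conv G f"] conv_zero_right)

lemma C_rowmat:
  assumes ij: "(i, j) \<in> pw_gens n"
  shows "C_mat n i j = rowmat n i j
     (delta (xi_el n i j \<otimes>\<^bsub>SD n\<^esub> x_el n j))
     (\<lambda>z. delta (xi_el n i j) z - delta (xi_el n i j \<otimes>\<^bsub>SD n\<^esub> wel n i j) z)
     (delta (xi_el n i j))"
proof -
  interpret group "SD n" by (rule SD_group)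
  have c: "xi_el n i j \<in> carrier (SD n)" "x_el n i \<in> carrier (SD n)" "x_el n j \<in> carrier (SD n)"
    using ij by (auto simp: pw_gens_def intro: xi_carrier x_carrier)
  have w: "wel n i j \<in> carrier (SD n)" "x_el n j \<otimes>\<^bsub>SD n\<^esub> x_el n i \<otimes>\<^bsub>SD n\<^esub> inv\<^bsub>SD n\<^esub> x_el n j = wel n i j"
    using c by (auto simp: wel_def m_assoc)
  have M: "M_mat n i j = rowmat n i j (delta (x_el n j)) (\<lambda>z. delta \<one>\<^bsub>SD n\<^esub> z - delta (wel n i j) z)
      (delta \<one>\<^bsub>SD n\<^esub>)"
    unfolding M_mat_def rowmat_def w(2) ..
  have e: "conv (SD n) (delta (xi_el n i j)) (\<lambda>z. delta \<one>\<^bsub>SD n\<^esub> z - delta (wel n i j) z)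
      = (\<lambda>z. delta (xi_el n i j) z - delta (xi_el n i j \<otimes>\<^bsub>SD n\<^esub> wel n i j) z)"
    using c w by (simp add: conv_sub_right ga_delta conv_delta_delta)
  show ?thesis
    unfolding C_mat_def M conv_rowmat e
    using c by (simp add: conv_delta_delta)
qed

lemma rowmat_apply: "p \<in> {1..n} \<Longrightarrow> q \<in> {1..n} \<Longrightarrow> rowmat n i j d e r p q =
   (if p = i then (if q = i then d else if q = j then e else (\<lambda>_. 0)) else if p = q then r else (\<lambda>_. 0))"
  by (simp add: rowmat_def)

lemma ga_rowmat: "ga G d \<Longrightarrow> ga G e \<Longrightarrow> ga G r \<Longrightarrow> ga G (rowmat n s t d e r a b)"
  by (simp add: rowmat_def ga_zero)

lemma mat_mult_eqI:
  assumes "\<And>p q. p \<in> {1..n} \<Longrightarrow> q \<in> {1..n} \<Longrightarrow> mat_mult G n A B p q = mat_mult G n A' B' p q"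
  shows "mat_mult G n A B = mat_mult G n A' B'"
proof (intro ext)
  fix p q z show "mat_mult G n A B p q z = mat_mult G n A' B' p q z"
    using assms[of p q] by (cases "p \<in> {1..n} \<and> q \<in> {1..n}") (auto simp: mat_mult_out)
qed

lemma mat_eqI:
  assumes "\<And>p q. p \<in> {1..n} \<Longrightarrow> q \<in> {1..n} \<Longrightarrow> mat_mult G n A B p q = mat_one G n p q"
  shows "mat_mult G n A B = mat_one G n"
proof (intro ext)
  fix p q z show "mat_mult G n A B p q z = mat_one G n p q z"
    using assms[of p q] by (cases "p \<in> {1..n} \<and> q \<in> {1..n}") (auto simp: mat_mult_out mat_one_def)
qed

context
  fixes n :: nat
begin

lemma push_x:
  assumes "(a, b) \<in> pw_gens n" "k \<in> {1..n}" "k \<noteq> a" "y \<in> carrier (SD n)"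
  shows "x_el n k \<otimes>\<^bsub>SD n\<^esub> (xi_el n a b \<otimes>\<^bsub>SD n\<^esub> y) = xi_el n a b \<otimes>\<^bsub>SD n\<^esub> (x_el n k \<otimes>\<^bsub>SD n\<^esub> y)"
proof -
  interpret group "SD n" by (rule SD_group)
  show ?thesis using assms xcomm[OF assms(1-3)] x_carrier xi_carrier by (simp add: m_assoc[symmetric])
qed

lemma push_x_end:
  assumes "(a, b) \<in> pw_gens n" "k \<in> {1..n}" "k \<noteq> a"
  shows "x_el n k \<otimes>\<^bsub>SD n\<^esub> xi_el n a b = xi_el n a b \<otimes>\<^bsub>SD n\<^esub> x_el n k"
  using xcomm[OF assms] .

lemma push_ix:
  assumes "(a, b) \<in> pw_gens n" "k \<in> {1..n}" "k \<noteq> a" "y \<in> carrier (SD n)"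
  shows "inv\<^bsub>SD n\<^esub> x_el n k \<otimes>\<^bsub>SD n\<^esub> (xi_el n a b \<otimes>\<^bsub>SD n\<^esub> y) = xi_el n a b \<otimes>\<^bsub>SD n\<^esub> (inv\<^bsub>SD n\<^esub> x_el n k \<otimes>\<^bsub>SD n\<^esub> y)"
proof -
  interpret group "SD n" by (rule SD_group)
  have xc: "x_el n k \<in> carrier (SD n)" "xi_el n a b \<in> carrier (SD n)" using assms x_carrier xi_carrier by auto
  have c: "x_el n k \<otimes>\<^bsub>SD n\<^esub> xi_el n a b = xi_el n a b \<otimes>\<^bsub>SD n\<^esub> x_el n k" using xcomm[OF assms(1-3)] .
  have "inv\<^bsub>SD n\<^esub> x_el n k \<otimes>\<^bsub>SD n\<^esub> xi_el n a b = xi_el n a b \<otimes>\<^bsub>SD n\<^esub> inv\<^bsub>SD n\<^esub> x_el n k"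
  proof -
    have "inv\<^bsub>SD n\<^esub> x_el n k \<otimes>\<^bsub>SD n\<^esub> xi_el n a b = inv\<^bsub>SD n\<^esub> x_el n k \<otimes>\<^bsub>SD n\<^esub> (xi_el n a b \<otimes>\<^bsub>SD n\<^esub> x_el n k) \<otimes>\<^bsub>SD n\<^esub> inv\<^bsub>SD n\<^esub> x_el n k"
      using xc by (simp add: m_assoc)
    also have "\<dots> = xi_el n a b \<otimes>\<^bsub>SD n\<^esub> inv\<^bsub>SD n\<^esub> x_el n k"
      using xc by (simp add: c[symmetric] m_assoc)
    finally show ?thesis .
  qed
  then show ?thesis using assms xc by (simp add: m_assoc[symmetric])
qed

lemma push_ix_end:
  assumes "(a, b) \<in> pw_gens n" "k \<in> {1..n}" "k \<noteq> a"
  shows "inv\<^bsub>SD n\<^esub> x_el n k \<otimes>\<^bsub>SD n\<^esub> xi_el n a b = xi_el n a b \<otimes>\<^bsub>SD n\<^esub> inv\<^bsub>SD n\<^esub> x_el n k"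
proof -
  interpret group "SD n" by (rule SD_group)
  have xc: "xi_el n a b \<in> carrier (SD n)" using assms xi_carrier by auto
  show ?thesis using push_ix[OF assms one_closed] assms xc x_carrier by simp
qed

lemma push_xa:
  assumes "(a, b) \<in> pw_gens n" "y \<in> carrier (SD n)"
  shows "x_el n a \<otimes>\<^bsub>SD n\<^esub> (xi_el n a b \<otimes>\<^bsub>SD n\<^esub> y) =
     xi_el n a b \<otimes>\<^bsub>SD n\<^esub> (x_el n b \<otimes>\<^bsub>SD n\<^esub> (x_el n a \<otimes>\<^bsub>SD n\<^esub> (inv\<^bsub>SD n\<^esub> x_el n b \<otimes>\<^bsub>SD n\<^esub> y)))"
proof -
  interpret group "SD n" by (rule SD_group)
  have xc: "x_el n a \<in> carrier (SD n)" "x_el n b \<in> carrier (SD n)" "xi_el n a b \<in> carrier (SD n)"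
    using assms x_carrier xi_carrier by (auto simp: pw_gens_def)
  show ?thesis using assms xc xconj[OF assms(1)] by (simp add: m_assoc[symmetric])
qed

lemma push_xa_end:
  assumes "(a, b) \<in> pw_gens n"
  shows "x_el n a \<otimes>\<^bsub>SD n\<^esub> xi_el n a b =
     xi_el n a b \<otimes>\<^bsub>SD n\<^esub> (x_el n b \<otimes>\<^bsub>SD n\<^esub> (x_el n a \<otimes>\<^bsub>SD n\<^esub> inv\<^bsub>SD n\<^esub> x_el n b))"
  using xconj[OF assms] .

lemma push_ixa:
  assumes "(a, b) \<in> pw_gens n" "y \<in> carrier (SD n)"
  shows "inv\<^bsub>SD n\<^esub> x_el n a \<otimes>\<^bsub>SD n\<^esub> (xi_el n a b \<otimes>\<^bsub>SD n\<^esub> y) =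
     xi_el n a b \<otimes>\<^bsub>SD n\<^esub> (x_el n b \<otimes>\<^bsub>SD n\<^esub> (inv\<^bsub>SD n\<^esub> x_el n a \<otimes>\<^bsub>SD n\<^esub> (inv\<^bsub>SD n\<^esub> x_el n b \<otimes>\<^bsub>SD n\<^esub> y)))"
proof -
  interpret group "SD n" by (rule SD_group)
  have xc: "x_el n a \<in> carrier (SD n)" "x_el n b \<in> carrier (SD n)" "xi_el n a b \<in> carrier (SD n)"
    using assms x_carrier xi_carrier by (auto simp: pw_gens_def)
  let ?X = "x_el n a" and ?B = "x_el n b" and ?Z = "xi_el n a b"
  have c: "?X \<otimes>\<^bsub>SD n\<^esub> ?Z = ?Z \<otimes>\<^bsub>SD n\<^esub> (?B \<otimes>\<^bsub>SD n\<^esub> (?X \<otimes>\<^bsub>SD n\<^esub> inv\<^bsub>SD n\<^esub> ?B))"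
    using xconj[OF assms(1)] .
  have "inv\<^bsub>SD n\<^esub> ?X \<otimes>\<^bsub>SD n\<^esub> ?Z = ?Z \<otimes>\<^bsub>SD n\<^esub> (?B \<otimes>\<^bsub>SD n\<^esub> (inv\<^bsub>SD n\<^esub> ?X \<otimes>\<^bsub>SD n\<^esub> inv\<^bsub>SD n\<^esub> ?B))"
  proof -
    have "inv\<^bsub>SD n\<^esub> ?X \<otimes>\<^bsub>SD n\<^esub> ?Z = inv\<^bsub>SD n\<^esub> ?X \<otimes>\<^bsub>SD n\<^esub> (?X \<otimes>\<^bsub>SD n\<^esub> ?Z) \<otimes>\<^bsub>SD n\<^esub> (?B \<otimes>\<^bsub>SD n\<^esub> (inv\<^bsub>SD n\<^esub> ?X \<otimes>\<^bsub>SD n\<^esub> inv\<^bsub>SD n\<^esub> ?B))"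
      using xc c by (simp add: m_assoc)
    also have "\<dots> = ?Z \<otimes>\<^bsub>SD n\<^esub> (?B \<otimes>\<^bsub>SD n\<^esub> (inv\<^bsub>SD n\<^esub> ?X \<otimes>\<^bsub>SD n\<^esub> inv\<^bsub>SD n\<^esub> ?B))"
      using xc by (simp add: m_assoc)
    finally show ?thesis .
  qed
  then show ?thesis using assms xc by (simp add: m_assoc[symmetric])
qed

lemma push_ixa_end:
  assumes "(a, b) \<in> pw_gens n"
  shows "inv\<^bsub>SD n\<^esub> x_el n a \<otimes>\<^bsub>SD n\<^esub> xi_el n a b =
     xi_el n a b \<otimes>\<^bsub>SD n\<^esub> (x_el n b \<otimes>\<^bsub>SD n\<^esub> (inv\<^bsub>SD n\<^esub> x_el n a \<otimes>\<^bsub>SD n\<^esub> inv\<^bsub>SD n\<^esub> x_el n b))"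
proof -
  interpret group "SD n" by (rule SD_group)
  have xc: "xi_el n a b \<in> carrier (SD n)" using assms xi_carrier by auto
  show ?thesis using push_ixa[OF assms one_closed] assms xc x_carrier by (simp add: pw_gens_def)
qed

end

definition tworow :: "nat \<Rightarrow> nat \<Rightarrow> nat \<Rightarrow> ('g \<Rightarrow> complex) \<Rightarrow> ('g \<Rightarrow> complex) \<Rightarrow>
   nat \<Rightarrow> nat \<Rightarrow> ('g \<Rightarrow> complex) \<Rightarrow> ('g \<Rightarrow> complex) \<Rightarrow> ('g \<Rightarrow> complex) \<Rightarrow> 'g gmat" where
  "tworow n i j a1 b1 s t a2 b2 c = (\<lambda>p q. if p \<in> {1..n} \<and> q \<in> {1..n} then
      (if p = i then (if q = i then a1 else if q = j then b1 else (\<lambda>_. 0))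
       else if p = s then (if q = s then a2 else if q = t then b2 else (\<lambda>_. 0))
       else if p = q then c else (\<lambda>_. 0)) else (\<lambda>_. 0))"

definition S3 :: "nat \<Rightarrow> nat \<Rightarrow> nat \<Rightarrow> nat \<Rightarrow> ('g \<Rightarrow> complex) \<Rightarrow> ('g \<Rightarrow> complex) \<Rightarrow> ('g \<Rightarrow> complex) \<Rightarrow>
   ('g \<Rightarrow> complex) \<Rightarrow> ('g \<Rightarrow> complex) \<Rightarrow> ('g \<Rightarrow> complex) \<Rightarrow> 'g gmat" where
  "S3 n i j k ii ij ik kk kj dg = (\<lambda>p q. if p \<in> {1..n} \<and> q \<in> {1..n} then
      (if p = i then (if q = i then ii else if q = j then ij else if q = k then ik else (\<lambda>_. 0))
       else if p = k then (if q = k then kk else if q = j then kj else (\<lambda>_. 0))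
       else if p = q then dg else (\<lambda>_. 0)) else (\<lambda>_. 0))"

lemma tworow_apply: "p \<in> {1..n} \<Longrightarrow> q \<in> {1..n} \<Longrightarrow> tworow n i j a1 b1 s t a2 b2 c p q =
      (if p = i then (if q = i then a1 else if q = j then b1 else (\<lambda>_. 0))
       else if p = s then (if q = s then a2 else if q = t then b2 else (\<lambda>_. 0))
       else if p = q then c else (\<lambda>_. 0))"
  by (simp add: tworow_def)

lemma S3_apply: "p \<in> {1..n} \<Longrightarrow> q \<in> {1..n} \<Longrightarrow> S3 n i j k ii ij ik kk kj dg p q =
      (if p = i then (if q = i then ii else if q = j then ij else if q = k then ik else (\<lambda>_. 0))
       else if p = k then (if q = k then kk else if q = j then kj else (\<lambda>_. 0))
       else if p = q then dg else (\<lambda>_. 0))"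
  by (simp add: S3_def)

lemma L0:
  assumes "i \<in> {1..n}" "j \<in> {1..n}" "i \<noteq> j"
  shows "mat_mult G n (rowmat n i j d1 e1 r1) (rowmat n i j d2 e2 r2) =
    rowmat n i j (conv G d1 d2) (\<lambda>z. conv G e1 r2 z + conv G d1 e2 z) (conv G r1 r2)"
proof (intro ext)
  fix p q z
  show "mat_mult G n (rowmat n i j d1 e1 r1) (rowmat n i j d2 e2 r2) p q z =
    rowmat n i j (conv G d1 d2) (\<lambda>z. conv G e1 r2 z + conv G d1 e2 z) (conv G r1 r2) p q z"
  proof (cases "p \<in> {1..n} \<and> q \<in> {1..n}")
    case False then show ?thesis by (auto simp: mat_mult_out rowmat_def)
  next
    case True
    then have pq: "p \<in> {1..n}" "q \<in> {1..n}" by auto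
    show ?thesis using assms(3)
      unfolding mat_mult_rowmat[OF assms(1) assms(2) assms(3) pq] rowmat_apply[OF pq] rowmat_apply[OF pq(1) assms(1)]
      by (simp add: conv_zero_left)
  qed
qed

lemma L1:
  assumes "i \<in> {1..n}" "j \<in> {1..n}" "s \<in> {1..n}" "t \<in> {1..n}" "i \<noteq> j" "s \<noteq> t" "i \<noteq> s" "j \<noteq> s" "t \<noteq> i"
  shows "mat_mult G n (rowmat n i j d1 e1 r1) (rowmat n s t d2 e2 r2) =
    tworow n i j (conv G d1 r2) (conv G e1 r2) s t (conv G r1 d2) (conv G r1 e2) (conv G r1 r2)"
proof (intro ext)
  fix p q z
  show "mat_mult G n (rowmat n i j d1 e1 r1) (rowmat n s t d2 e2 r2) p q z =
    tworow n i j (conv G d1 r2) (conv G e1 r2) s t (conv G r1 d2) (conv G r1 e2) (conv G r1 r2) p q z"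
  proof (cases "p \<in> {1..n} \<and> q \<in> {1..n}")
    case False then show ?thesis by (auto simp: mat_mult_out tworow_def)
  next
    case True
    then have pq: "p \<in> {1..n}" "q \<in> {1..n}" by auto
    show ?thesis using assms(5-9)
      unfolding mat_mult_rowmat[OF assms(3) assms(4) assms(6) pq] rowmat_apply[OF pq] rowmat_apply[OF pq(1) assms(3)] tworow_apply[OF pq]
      by (simp add: conv_zero_left)
  qed
qed

lemma tworow_swap: "i \<noteq> s \<Longrightarrow> tworow n i j a1 b1 s t a2 b2 c = tworow n s t a2 b2 i j a1 b1 c"
  by (auto simp: tworow_def fun_eq_iff)

lemma tworow_S3: "j \<noteq> k \<Longrightarrow> i \<noteq> k \<Longrightarrow> tworow n i j a1 b1 k j a2 b2 c = S3 n i j k a1 b1 (\<lambda>_. 0) a2 b2 c"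
  by (auto simp: tworow_def S3_def fun_eq_iff)

lemma L3:
  assumes "i \<in> {1..n}" "j \<in> {1..n}" "k \<in> {1..n}" "i \<noteq> j" "j \<noteq> k" "i \<noteq> k"
  shows "mat_mult G n (S3 n i j k ii ij ik kk kj dg) (rowmat n i k d e r) =
    S3 n i j k (conv G ii d) (conv G ij r) (\<lambda>z. conv G ik r z + conv G ii e z) (conv G kk r) (conv G kj r) (conv G dg r)"
proof (intro ext)
  fix p q z
  show "mat_mult G n (S3 n i j k ii ij ik kk kj dg) (rowmat n i k d e r) p q z =
    S3 n i j k (conv G ii d) (conv G ij r) (\<lambda>z. conv G ik r z + conv G ii e z) (conv G kk r) (conv G kj r) (conv G dg r) p q z"
  proof (cases "p \<in> {1..n} \<and> q \<in> {1..n}")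
    case False then show ?thesis by (auto simp: mat_mult_out S3_def)
  next
    case True
    then have pq: "p \<in> {1..n}" "q \<in> {1..n}" by auto
    show ?thesis using assms(4-6)
      unfolding mat_mult_rowmat[OF assms(1) assms(3) assms(6) pq] S3_apply[OF pq] S3_apply[OF pq(1) assms(1)]
      by (simp add: conv_zero_left)
  qed
qed

lemma L4:
  assumes "i \<in> {1..n}" "j \<in> {1..n}" "k \<in> {1..n}" "i \<noteq> j" "j \<noteq> k" "i \<noteq> k"
  shows "mat_mult G n (rowmat n i k d3 e3 r3) (rowmat n i j d1 e1 r1) =
    S3 n i j k (conv G d3 d1) (conv G d3 e1) (conv G e3 r1) (conv G r3 r1) (\<lambda>_. 0) (conv G r3 r1)"
proof (intro ext)
  fix p q z
  show "mat_mult G n (rowmat n i k d3 e3 r3) (rowmat n i j d1 e1 r1) p q z =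
    S3 n i j k (conv G d3 d1) (conv G d3 e1) (conv G e3 r1) (conv G r3 r1) (\<lambda>_. 0) (conv G r3 r1) p q z"
  proof (cases "p \<in> {1..n} \<and> q \<in> {1..n}")
    case False then show ?thesis by (auto simp: mat_mult_out S3_def)
  next
    case True
    then have pq: "p \<in> {1..n}" "q \<in> {1..n}" by auto
    show ?thesis using assms(4-6)
      unfolding mat_mult_rowmat[OF assms(1) assms(2) assms(4) pq] rowmat_apply[OF pq] rowmat_apply[OF pq(1) assms(1)] S3_apply[OF pq]
      by (simp add: conv_zero_left)
  qed
qed

lemma L5:
  assumes "i \<in> {1..n}" "j \<in> {1..n}" "k \<in> {1..n}" "i \<noteq> j" "j \<noteq> k" "i \<noteq> k"
  shows "mat_mult G n (S3 n i j k ii ij ik kk kj dg) (rowmat n k j d e r) =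
    S3 n i j k (conv G ii r) (\<lambda>z. conv G ij r z + conv G ik e z) (conv G ik d) (conv G kk d)
      (\<lambda>z. conv G kj r z + conv G kk e z) (conv G dg r)"
proof (intro ext)
  fix p q z
  show "mat_mult G n (S3 n i j k ii ij ik kk kj dg) (rowmat n k j d e r) p q z =
    S3 n i j k (conv G ii r) (\<lambda>z. conv G ij r z + conv G ik e z) (conv G ik d) (conv G kk d)
      (\<lambda>z. conv G kj r z + conv G kk e z) (conv G dg r) p q z"
  proof (cases "p \<in> {1..n} \<and> q \<in> {1..n}")
    case False then show ?thesis by (auto simp: mat_mult_out S3_def)
  next
    case True
    then have pq: "p \<in> {1..n}" "q \<in> {1..n}" by auto
    show ?thesis using assms(4-6)
      unfolding mat_mult_rowmat[OF assms(3) assms(2) not_sym[OF assms(5)] pq] S3_apply[OF pq] S3_apply[OF pq(1) assms(3)]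
      by (simp add: conv_zero_left)
  qed
qed

definition fsupp :: "('g \<Rightarrow> complex) \<Rightarrow> bool" where "fsupp f \<longleftrightarrow> finite (gsupp f)"

lemma fsupp_delta [simp]: "fsupp (delta a)" by (simp add: fsupp_def gsupp_delta)
lemma fsupp_zero [simp]: "fsupp (\<lambda>_. 0)" by (simp add: fsupp_def gsupp_def)
lemma fsupp_sub [simp]: "fsupp f \<Longrightarrow> fsupp g \<Longrightarrow> fsupp (\<lambda>z. f z - g z)"
  unfolding fsupp_def gsupp_def by (rule finite_subset[of _ "{x. f x \<noteq> 0} \<union> {x. g x \<noteq> 0}"]) auto
lemma fsupp_add [simp]: "fsupp f \<Longrightarrow> fsupp g \<Longrightarrow> fsupp (\<lambda>z. f z + g z)"
  unfolding fsupp_def gsupp_def by (rule finite_subset[of _ "{x. f x \<noteq> 0} \<union> {x. g x \<noteq> 0}"]) auto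
lemma fsupp_conv [simp]: "fsupp f \<Longrightarrow> fsupp g \<Longrightarrow> fsupp (conv G f g)"
  unfolding fsupp_def using gsupp_conv[of G f g] by (auto intro: finite_subset)

lemma fconv_add_right:
  assumes "fsupp f" "fsupp g1" "fsupp g2"
  shows "conv G f (\<lambda>z. g1 z + g2 z) = (\<lambda>z. conv G f g1 z + conv G f g2 z)"
proof
  fix z
  let ?A = "gsupp f" and ?B = "gsupp g1 \<union> gsupp g2"
  have fin: "finite ?A" "finite ?B" using assms by (auto simp: fsupp_def)
  have s: "gsupp (\<lambda>z. g1 z + g2 z) \<subseteq> ?B" "gsupp g1 \<subseteq> ?B" "gsupp g2 \<subseteq> ?B"
    by (auto simp: gsupp_def)
  show "conv G f (\<lambda>z. g1 z + g2 z) z = conv G f g1 z + conv G f g2 z"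
    using fin s by (simp add: conv_superset[of ?A ?B] sum.distrib[symmetric] algebra_simps)
qed

lemma fconv_sub_right:
  assumes "fsupp f" "fsupp g1" "fsupp g2"
  shows "conv G f (\<lambda>z. g1 z - g2 z) = (\<lambda>z. conv G f g1 z - conv G f g2 z)"
proof
  fix z
  let ?A = "gsupp f" and ?B = "gsupp g1 \<union> gsupp g2"
  have fin: "finite ?A" "finite ?B" using assms by (auto simp: fsupp_def)
  have s: "gsupp (\<lambda>z. g1 z - g2 z) \<subseteq> ?B" "gsupp g1 \<subseteq> ?B" "gsupp g2 \<subseteq> ?B"
    by (auto simp: gsupp_def)
  show "conv G f (\<lambda>z. g1 z - g2 z) z = conv G f g1 z - conv G f g2 z"
    using fin s by (simp add: conv_superset[of ?A ?B] sum_subtractf[symmetric] algebra_simps)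
qed

lemma fconv_add_left:
  assumes "fsupp f1" "fsupp f2" "fsupp g"
  shows "conv G (\<lambda>z. f1 z + f2 z) g = (\<lambda>z. conv G f1 g z + conv G f2 g z)"
proof
  fix z
  let ?A = "gsupp f1 \<union> gsupp f2" and ?B = "gsupp g"
  have fin: "finite ?A" "finite ?B" using assms by (auto simp: fsupp_def)
  have s: "gsupp (\<lambda>z. f1 z + f2 z) \<subseteq> ?A" "gsupp f1 \<subseteq> ?A" "gsupp f2 \<subseteq> ?A"
    by (auto simp: gsupp_def)
  show "conv G (\<lambda>z. f1 z + f2 z) g z = conv G f1 g z + conv G f2 g z"
    using fin s by (simp add: conv_superset[of ?A ?B] sum.distrib[symmetric] algebra_simps)
qed

lemma fconv_sub_left:
  assumes "fsupp f1" "fsupp f2" "fsupp g"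
  shows "conv G (\<lambda>z. f1 z - f2 z) g = (\<lambda>z. conv G f1 g z - conv G f2 g z)"
proof
  fix z
  let ?A = "gsupp f1 \<union> gsupp f2" and ?B = "gsupp g"
  have fin: "finite ?A" "finite ?B" using assms by (auto simp: fsupp_def)
  have s: "gsupp (\<lambda>z. f1 z - f2 z) \<subseteq> ?A" "gsupp f1 \<subseteq> ?A" "gsupp f2 \<subseteq> ?A"
    by (auto simp: gsupp_def)
  show "conv G (\<lambda>z. f1 z - f2 z) g z = conv G f1 g z - conv G f2 g z"
    using fin s by (simp add: conv_superset[of ?A ?B] sum_subtractf[symmetric] algebra_simps)
qed

lemmas fcalc = conv_delta_delta fconv_sub_left fconv_sub_right fconv_add_left fconv_add_right
  conv_zero_left conv_zero_right

definition validx :: "nat \<Rightarrow> nat \<Rightarrow> bool" where "validx n k \<longleftrightarrow> k \<in> {1..n}"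

context fixes n :: nat
begin

lemma vpush_x:
  "(a, b) \<in> pw_gens n \<Longrightarrow> validx n k \<Longrightarrow> k \<noteq> a \<Longrightarrow> y \<in> carrier (SD n) \<Longrightarrow>
   x_el n k \<otimes>\<^bsub>SD n\<^esub> (xi_el n a b \<otimes>\<^bsub>SD n\<^esub> y) = xi_el n a b \<otimes>\<^bsub>SD n\<^esub> (x_el n k \<otimes>\<^bsub>SD n\<^esub> y)"
  unfolding validx_def by (rule push_x)
lemma vpush_x_end:
  "(a, b) \<in> pw_gens n \<Longrightarrow> validx n k \<Longrightarrow> k \<noteq> a \<Longrightarrow>
   x_el n k \<otimes>\<^bsub>SD n\<^esub> xi_el n a b = xi_el n a b \<otimes>\<^bsub>SD n\<^esub> x_el n k"
  unfolding validx_def by (rule push_x_end)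
lemma vpush_ix:
  "(a, b) \<in> pw_gens n \<Longrightarrow> validx n k \<Longrightarrow> k \<noteq> a \<Longrightarrow> y \<in> carrier (SD n) \<Longrightarrow>
   inv\<^bsub>SD n\<^esub> x_el n k \<otimes>\<^bsub>SD n\<^esub> (xi_el n a b \<otimes>\<^bsub>SD n\<^esub> y) = xi_el n a b \<otimes>\<^bsub>SD n\<^esub> (inv\<^bsub>SD n\<^esub> x_el n k \<otimes>\<^bsub>SD n\<^esub> y)"
  unfolding validx_def by (rule push_ix)
lemma vpush_ix_end:
  "(a, b) \<in> pw_gens n \<Longrightarrow> validx n k \<Longrightarrow> k \<noteq> a \<Longrightarrow>
   inv\<^bsub>SD n\<^esub> x_el n k \<otimes>\<^bsub>SD n\<^esub> xi_el n a b = xi_el n a b \<otimes>\<^bsub>SD n\<^esub> inv\<^bsub>SD n\<^esub> x_el n k"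
  unfolding validx_def by (rule push_ix_end)

lemmas vpush = vpush_x vpush_x_end vpush_ix vpush_ix_end push_xa push_xa_end push_ixa push_ixa_end

end

lemma mat_one_rowmat:
  assumes "i \<in> {1..n}" "j \<in> {1..n}" "i \<noteq> j"
  shows "mat_one G n = rowmat n i j (delta \<one>\<^bsub>G\<^esub>) (\<lambda>_. 0) (delta \<one>\<^bsub>G\<^esub>)"
  using assms by (auto simp: mat_one_def rowmat_def fun_eq_iff)

lemma C_Cinv:
  assumes ij: "(i, j) \<in> pw_gens n"
  shows "mat_mult (SD n) n (C_mat n i j) (Cinv n i j) = mat_one (SD n) n"
proof -
  interpret group "SD n" by (rule SD_group)
  have R: "i \<in> {1..n}" "j \<in> {1..n}" "i \<noteq> j" using ij by (auto simp: pw_gens_def)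
  have c: "xi_el n i j \<in> carrier (SD n)" "x_el n i \<in> carrier (SD n)" "x_el n j \<in> carrier (SD n)"
    using ij R by (auto intro: xi_carrier x_carrier)
  show ?thesis
    unfolding C_rowmat[OF ij] Cinv_def L0[OF R] mat_one_rowmat[OF R]
    using c by (simp add: fcalc wel_def m_assoc fun_eq_iff)
qed

lemma Cinv_C:
  assumes ij: "(i, j) \<in> pw_gens n"
  shows "mat_mult (SD n) n (Cinv n i j) (C_mat n i j) = mat_one (SD n) n"
proof -
  interpret group "SD n" by (rule SD_group)
  have R: "i \<in> {1..n}" "j \<in> {1..n}" "i \<noteq> j" using ij by (auto simp: pw_gens_def)
  have c: "xi_el n i j \<in> carrier (SD n)" "x_el n i \<in> carrier (SD n)" "x_el n j \<in> carrier (SD n)"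
    using ij R by (auto intro: xi_carrier x_carrier)
  show ?thesis
    unfolding C_rowmat[OF ij] Cinv_def L0[OF R] mat_one_rowmat[OF R]
    using c by (simp add: fcalc wel_def m_assoc fun_eq_iff)
qed

lemma C_comm1:
  assumes ij: "(i, j) \<in> pw_gens n" and st: "(s, t) \<in> pw_gens n" and d: "{i, j} \<inter> {s, t} = {}"
  shows "mat_mult (SD n) n (C_mat n i j) (C_mat n s t) = mat_mult (SD n) n (C_mat n s t) (C_mat n i j)"
proof -
  interpret group "SD n" by (rule SD_group)
  have R: "i \<in> {1..n}" "j \<in> {1..n}" "s \<in> {1..n}" "t \<in> {1..n}" using ij st by (auto simp: pw_gens_def)
  have D: "i \<noteq> j" "j \<noteq> i" "s \<noteq> t" "t \<noteq> s" "i \<noteq> s" "s \<noteq> i" "i \<noteq> t" "t \<noteq> i" "j \<noteq> s" "s \<noteq> j"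
    "j \<noteq> t" "t \<noteq> j" using ij st d by (auto simp: pw_gens_def)
  have V: "validx n i" "validx n j" "validx n s" "validx n t" using R by (auto simp: validx_def)
  have c: "xi_el n i j \<in> carrier (SD n)" "xi_el n s t \<in> carrier (SD n)"
    "x_el n i \<in> carrier (SD n)" "x_el n j \<in> carrier (SD n)" "x_el n s \<in> carrier (SD n)" "x_el n t \<in> carrier (SD n)"
    using ij st R by (auto intro: xi_carrier x_carrier)
  have cm: "xi_el n s t \<otimes>\<^bsub>SD n\<^esub> xi_el n i j = xi_el n i j \<otimes>\<^bsub>SD n\<^esub> xi_el n s t"
    using xi_comm1[OF ij st d] by simp
  have cm': "\<And>y. y \<in> carrier (SD n) \<Longrightarrow> xi_el n s t \<otimes>\<^bsub>SD n\<^esub> (xi_el n i j \<otimes>\<^bsub>SD n\<^esub> y) = xi_el n i j \<otimes>\<^bsub>SD n\<^esub> (xi_el n s t \<otimes>\<^bsub>SD n\<^esub> y)"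
    using c by (simp add: m_assoc[symmetric] cm)
  show ?thesis
    unfolding C_rowmat[OF ij] C_rowmat[OF st]
    unfolding L1[OF R D(1) D(3) D(5) D(9) D(8)] L1[OF R(3,4,1,2) D(3) D(1) D(6) D(8) D(9)]
      tworow_swap[OF D(6)]
    using c D V ij st by (simp add: fcalc wel_def m_assoc fun_eq_iff vpush cm cm')
qed

lemma C_comm2:
  assumes R: "i \<in> {1..n}" "j \<in> {1..n}" "k \<in> {1..n}" and D0: "i \<noteq> j" "j \<noteq> k" "i \<noteq> k"
  shows "mat_mult (SD n) n (C_mat n i j) (C_mat n k j) = mat_mult (SD n) n (C_mat n k j) (C_mat n i j)"
proof -
  interpret group "SD n" by (rule SD_group)
  have ij: "(i, j) \<in> pw_gens n" and kj: "(k, j) \<in> pw_gens n" and ik: "(i, k) \<in> pw_gens n"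
    using R D0 by (auto simp: pw_gens_def)
  have D: "i \<noteq> j" "j \<noteq> i" "k \<noteq> j" "j \<noteq> k" "i \<noteq> k" "k \<noteq> i" using D0 by auto
  have V: "validx n i" "validx n j" "validx n k" using R by (auto simp: validx_def)
  have c: "xi_el n i j \<in> carrier (SD n)" "xi_el n k j \<in> carrier (SD n)"
    "x_el n i \<in> carrier (SD n)" "x_el n j \<in> carrier (SD n)" "x_el n k \<in> carrier (SD n)"
    using ij kj R by (auto intro: xi_carrier x_carrier)
  have cm: "xi_el n k j \<otimes>\<^bsub>SD n\<^esub> xi_el n i j = xi_el n i j \<otimes>\<^bsub>SD n\<^esub> xi_el n k j"
    using xi_comm2[OF R D0] by simp
  have cm': "\<And>y. y \<in> carrier (SD n) \<Longrightarrow> xi_el n k j \<otimes>\<^bsub>SD n\<^esub> (xi_el n i j \<otimes>\<^bsub>SD n\<^esub> y) = xi_el n i j \<otimes>\<^bsub>SD n\<^esub> (xi_el n k j \<otimes>\<^bsub>SD n\<^esub> y)"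
    using c by (simp add: m_assoc[symmetric] cm)
  show ?thesis
    unfolding C_rowmat[OF ij] C_rowmat[OF kj]
    unfolding L1[OF R(1,2,3,2) D(1) D(3) D(5) D(4) D(2)] L1[OF R(3,2,1,2) D(3) D(1) D(6) D(2) D(4)]
      tworow_swap[OF D(6)]
    using c D V ij kj by (simp add: fcalc wel_def m_assoc fun_eq_iff vpush cm cm')
qed

lemma C_comm3:
  assumes R: "i \<in> {1..n}" "j \<in> {1..n}" "k \<in> {1..n}" and D0: "i \<noteq> j" "j \<noteq> k" "i \<noteq> k"
  shows "mat_mult (SD n) n (mat_mult (SD n) n (C_mat n i j) (C_mat n k j)) (C_mat n i k)
       = mat_mult (SD n) n (mat_mult (SD n) n (C_mat n i k) (C_mat n i j)) (C_mat n k j)"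
proof -
  interpret group "SD n" by (rule SD_group)
  have ij: "(i, j) \<in> pw_gens n" and kj: "(k, j) \<in> pw_gens n" and ik: "(i, k) \<in> pw_gens n"
    using R D0 by (auto simp: pw_gens_def)
  have D: "i \<noteq> j" "j \<noteq> i" "k \<noteq> j" "j \<noteq> k" "i \<noteq> k" "k \<noteq> i" using D0 by auto
  have V: "validx n i" "validx n j" "validx n k" using R by (auto simp: validx_def)
  have c: "xi_el n i j \<in> carrier (SD n)" "xi_el n k j \<in> carrier (SD n)" "xi_el n i k \<in> carrier (SD n)"
    "x_el n i \<in> carrier (SD n)" "x_el n j \<in> carrier (SD n)" "x_el n k \<in> carrier (SD n)"
    using ij kj ik R by (auto intro: xi_carrier x_carrier)
  have cm: "xi_el n i k \<otimes>\<^bsub>SD n\<^esub> (xi_el n i j \<otimes>\<^bsub>SD n\<^esub> xi_el n k j) = xi_el n i j \<otimes>\<^bsub>SD n\<^esub> (xi_el n k j \<otimes>\<^bsub>SD n\<^esub> xi_el n i k)"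
    using xi_comm3[OF R D0] by simp
  have cm': "\<And>y. y \<in> carrier (SD n) \<Longrightarrow> xi_el n i k \<otimes>\<^bsub>SD n\<^esub> (xi_el n i j \<otimes>\<^bsub>SD n\<^esub> (xi_el n k j \<otimes>\<^bsub>SD n\<^esub> y))
       = xi_el n i j \<otimes>\<^bsub>SD n\<^esub> (xi_el n k j \<otimes>\<^bsub>SD n\<^esub> (xi_el n i k \<otimes>\<^bsub>SD n\<^esub> y))"
    using c by (simp add: m_assoc[symmetric] cm)
  show ?thesis
    unfolding C_rowmat[OF ij] C_rowmat[OF kj] C_rowmat[OF ik]
    unfolding L1[OF R(1,2,3,2) D(1) D(3) D(5) D(4) D(2)] tworow_S3[OF D(4) D(5)]
      L3[OF R D0] L4[OF R D0] L5[OF R D0]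
    using c D V ij kj ik by (simp add: fcalc wel_def m_assoc fun_eq_iff vpush cm cm')
qed

section \<open>The retraction SD n to PW n\<close>

fun wlet :: "sgen \<times> bool \<Rightarrow> ((nat \<times> nat) \<times> bool) list" where
  "wlet (X k, b) = []"
| "wlet (Xi i j, b) = [((i, j), b)]"

definition wmap :: "sgen word \<Rightarrow> (nat \<times> nat) word" where
  "wmap w = concat (map wlet w)"

lemma wmap_simps [simp]: "wmap [] = []" "wmap (x # w) = wlet x @ wmap w" "wmap (u @ v) = wmap u @ wmap v"
  by (simp_all add: wmap_def)

lemma wlet_flip: "wlet (a, \<not> b) = map (\<lambda>(c, d). (c, \<not> d)) (wlet (a, b))"
  by (cases a) auto

lemma wmap_inv: "wmap (inv_word w) = inv_word (wmap w)"
proof (induction w)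
  case Nil then show ?case by simp
next
  case (Cons x w)
  obtain a b where x: "x = (a, b)" by force
  show ?case using Cons x by (cases a) (auto simp: inv_word_def)
qed

lemma wmap_comm: "wmap (comm_word u v) = comm_word (wmap u) (wmap v)"
  by (simp add: comm_word_def wmap_inv)

lemma PW_rel1: "(i, j) \<in> pw_gens n \<Longrightarrow> (s, t) \<in> pw_gens n \<Longrightarrow> {i, j} \<inter> {s, t} = {} \<Longrightarrow>
    comm_word [((i, j), True)] [((s, t), True)] \<in> PW_rels n"
  unfolding PW_rels_def mccool_rels_def Let_def
  by (rule UnI1, rule UnI1, rule CollectI, rule exI[of _ i], rule exI[of _ j], rule exI[of _ s],
      rule exI[of _ t]) simp

lemma PW_rel2: "i \<in> {1..n} \<Longrightarrow> j \<in> {1..n} \<Longrightarrow> k \<in> {1..n} \<Longrightarrow> i \<noteq> j \<Longrightarrow> j \<noteq> k \<Longrightarrow> i \<noteq> k \<Longrightarrow>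
    comm_word [((i, j), True)] [((k, j), True)] \<in> PW_rels n"
  unfolding PW_rels_def mccool_rels_def Let_def
  by (rule UnI1, rule UnI2, rule CollectI, rule exI[of _ i], rule exI[of _ j], rule exI[of _ k]) simp

lemma PW_rel3: "i \<in> {1..n} \<Longrightarrow> j \<in> {1..n} \<Longrightarrow> k \<in> {1..n} \<Longrightarrow> i \<noteq> j \<Longrightarrow> j \<noteq> k \<Longrightarrow> i \<noteq> k \<Longrightarrow>
    comm_word [((i, j), True), ((k, j), True)] [((i, k), True)] \<in> PW_rels n"
  unfolding PW_rels_def mccool_rels_def Let_def
  by (rule UnI2, rule CollectI, rule exI[of _ i], rule exI[of _ j], rule exI[of _ k]) simp

lemma wmap_relator:
  assumes "r \<in> SD_rels n"
  shows "pres_rel (PW_rels n) (wmap r) []"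
proof -
  have rel: "pres_rel (PW_rels n) r' []" if "r' \<in> PW_rels n" for r'
    using pres_rel.pr_relator[OF that, of "[]" "[]"] by simp
  have canc: "pres_rel (PW_rels n) [(a, False), (a, True)] []" for a
    using pres_rel.pr_cancel[of "PW_rels n" "[]" a False "[]"] by simp
  from assms consider
    (m1) i j s t where "r = comm_word [(Xi i j, True)] [(Xi s t, True)]" "(i, j) \<in> pw_gens n" "(s, t) \<in> pw_gens n"
      "{i, j} \<inter> {s, t} = {}"
  | (m2) i j k where "r = comm_word [(Xi i j, True)] [(Xi k j, True)]" "i \<in> {1..n}" "j \<in> {1..n}" "k \<in> {1..n}"
      "i \<noteq> j" "j \<noteq> k" "i \<noteq> k"
  | (m3) i j k where "r = comm_word [(Xi i j, True), (Xi k j, True)] [(Xi i k, True)]" "i \<in> {1..n}" "j \<in> {1..n}"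
      "k \<in> {1..n}" "i \<noteq> j" "j \<noteq> k" "i \<noteq> k"
  | (c1) i j k where "r = [(Xi i j, False), (X k, True), (Xi i j, True), (X k, False)]"
  | (c2) i j where "r = [(Xi i j, False), (X i, True), (Xi i j, True), (X j, True), (X i, False), (X j, False)]"
    unfolding SD_rels_def mccool_rels_def Let_def by auto
  then show ?thesis
  proof cases
    case m1 then show ?thesis using rel PW_rel1 by (simp add: wmap_comm)
  next
    case m2 then show ?thesis using rel PW_rel2 by (simp add: wmap_comm)
  next
    case m3 then show ?thesis using rel PW_rel3 by (simp add: wmap_comm)
  next
    case c1 then show ?thesis using canc by simp
  next
    case c2 then show ?thesis using canc by simp
  qed
qed

lemma wmap_pres_rel: "pres_rel (SD_rels n) u v \<Longrightarrow> pres_rel (PW_rels n) (wmap u) (wmap v)"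
proof (induction rule: pres_rel.induct)
  case (pr_refl w) show ?case by (rule pres_rel.pr_refl)
next
  case (pr_sym u v) show ?case by (rule pres_rel.pr_sym[OF pr_sym.IH])
next
  case (pr_trans u v w) show ?case by (rule pres_rel.pr_trans[OF pr_trans.IH(1) pr_trans.IH(2)])
next
  case (pr_cancel u a b v)
  show ?case
  proof (cases a)
    case (X k) then show ?thesis by (simp add: pres_rel.pr_refl)
  next
    case (Xi i j)
    then show ?thesis using pres_rel.pr_cancel[of "PW_rels n" "wmap u" "(i, j)" b "wmap v"] by simp
  qed
next
  case (pr_relator r u v)
  have "pres_rel (PW_rels n) (wmap u @ (wmap r @ wmap v)) (wmap u @ ([] @ wmap v))"
    by (intro pres_rel_app_left pres_rel_app_right wmap_relator pr_relator)
  then show ?case by simp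
qed

definition rho :: "nat \<Rightarrow> sgen word set \<Rightarrow> (nat \<times> nat) word set" where
  "rho n Y = pres_class (PW_rels n) (wmap (SOME w. w \<in> Y))"

lemma rho_class: "rho n (pres_class (SD_rels n) w) = pres_class (PW_rels n) (wmap w)"
proof -
  have "w \<in> pres_class (SD_rels n) w" by (simp add: pres_class_mem pres_rel.pr_refl)
  then have "(SOME w'. w' \<in> pres_class (SD_rels n) w) \<in> pres_class (SD_rels n) w" by (rule someI)
  then have "pres_rel (SD_rels n) w (SOME w'. w' \<in> pres_class (SD_rels n) w)" by (simp add: pres_class_mem)
  then have "pres_rel (PW_rels n) (wmap w) (wmap (SOME w'. w' \<in> pres_class (SD_rels n) w))"
    by (rule wmap_pres_rel)
  then show ?thesis unfolding rho_def by (simp add: pres_class_eq[symmetric])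
qed

lemma wmap_set: "set w \<subseteq> SD_gens n \<times> UNIV \<Longrightarrow> set (wmap w) \<subseteq> pw_gens n \<times> UNIV"
proof (induction w)
  case Nil then show ?case by simp
next
  case (Cons x w)
  obtain a b where x: "x = (a, b)" by force
  show ?case using Cons x by (cases a) (auto simp: SD_gens_def)
qed

lemma PW_group: "group (PW n)"
  unfolding PW_def by (rule presented_group_is_group)

lemma rho_hom: "rho n \<in> hom (SD n) (PW n)"
proof (rule homI)
  fix x assume "x \<in> carrier (SD n)"
  then obtain w where "x = pres_class (SD_rels n) w" "set w \<subseteq> SD_gens n \<times> UNIV"
    by (auto simp: SD_def pres_carrier)
  then show "rho n x \<in> carrier (PW n)"
    using wmap_set[of w n] by (auto simp: rho_class PW_def pres_carrier intro!: exI[of _ "wmap w"])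
next
  fix x y assume "x \<in> carrier (SD n)" "y \<in> carrier (SD n)"
  then obtain u v where "x = pres_class (SD_rels n) u" "y = pres_class (SD_rels n) v"
    by (auto simp: SD_def pres_carrier)
  then show "rho n (x \<otimes>\<^bsub>SD n\<^esub> y) = rho n x \<otimes>\<^bsub>PW n\<^esub> rho n y"
    by (simp add: SD_def PW_def pres_mult rho_class)
qed

lemma rho_group_hom: "group_hom (SD n) (PW n) (rho n)"
  using SD_group PW_group rho_hom by (simp add: group_hom_def group_hom_axioms_def)

lemma rho_xi: "rho n (xi_el n i j) = gen_class (PW_rels n) (i, j)"
  by (simp add: xi_el_def gen_class_def rho_class)

lemma rho_x: "rho n (x_el n k) = \<one>\<^bsub>PW n\<^esub>"
  by (simp add: x_el_def gen_class_def rho_class PW_def pres_one)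

section \<open>Grading\<close>

definition graded :: "nat \<Rightarrow> (nat \<times> nat) word set \<Rightarrow> sgen word set gmat \<Rightarrow> bool" where
  "graded n D A \<longleftrightarrow> (\<forall>a b z. A a b z \<noteq> 0 \<longrightarrow> z \<in> carrier (SD n) \<and> rho n z = D)"

lemma graded_mult:
  assumes A: "graded n D A" and B: "graded n E B"
  shows "graded n (D \<otimes>\<^bsub>PW n\<^esub> E) (mat_mult (SD n) n A B)"
  unfolding graded_def
proof (intro allI impI)
  fix a b z assume nz: "mat_mult (SD n) n A B a b z \<noteq> 0"
  interpret rh: group_hom "SD n" "PW n" "rho n" by (rule rho_group_hom)
  have ab: "a \<in> {1..n} \<and> b \<in> {1..n}"
    using nz by (cases "a \<in> {1..n} \<and> b \<in> {1..n}") (auto simp: mat_mult_out)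
  then have "(\<Sum>k\<in>{1..n}. conv (SD n) (A a k) (B k b) z) \<noteq> 0" using nz by (simp add: mat_mult_def)
  then obtain k where "conv (SD n) (A a k) (B k b) z \<noteq> 0"
    by (rule sum.not_neutral_contains_not_neutral)
  then have "z \<in> gsupp (conv (SD n) (A a k) (B k b))" by (simp add: gsupp_def)
  then obtain x y where xy: "A a k x \<noteq> 0" "B k b y \<noteq> 0" "z = x \<otimes>\<^bsub>SD n\<^esub> y"
    using gsupp_conv[of "SD n" "A a k" "B k b"] by (auto simp: gsupp_def)
  have x: "x \<in> carrier (SD n)" "rho n x = D" using A xy(1) by (auto simp: graded_def)
  have y: "y \<in> carrier (SD n)" "rho n y = E" using B xy(2) by (auto simp: graded_def)
  show "z \<in> carrier (SD n) \<and> rho n z = D \<otimes>\<^bsub>PW n\<^esub> E"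
    using x y xy(3) by simp
qed

lemma graded_one: "graded n \<one>\<^bsub>PW n\<^esub> (mat_one (SD n) n)"
proof -
  interpret rh: group_hom "SD n" "PW n" "rho n" by (rule rho_group_hom)
  show ?thesis by (auto simp: graded_def mat_one_def delta_def split: if_splits)
qed

lemma graded_rowmat:
  assumes "\<And>z. d z \<noteq> 0 \<Longrightarrow> z \<in> carrier (SD n) \<and> rho n z = D"
    "\<And>z. e z \<noteq> 0 \<Longrightarrow> z \<in> carrier (SD n) \<and> rho n z = D"
    "\<And>z. r z \<noteq> 0 \<Longrightarrow> z \<in> carrier (SD n) \<and> rho n z = D"
  shows "graded n D (rowmat n i j d e r)"
  using assms unfolding graded_def rowmat_def by auto

lemma graded_C:
  assumes ij: "(i, j) \<in> pw_gens n"
  shows "graded n (gen_class (PW_rels n) (i, j)) (C_mat n i j)"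
proof -
  interpret rh: group_hom "SD n" "PW n" "rho n" by (rule rho_group_hom)
  interpret S: group "SD n" by (rule SD_group)
  interpret P: group "PW n" by (rule PW_group)
  have c: "xi_el n i j \<in> carrier (SD n)" "x_el n i \<in> carrier (SD n)" "x_el n j \<in> carrier (SD n)"
    using ij by (auto simp: pw_gens_def intro: xi_carrier x_carrier)
  have g: "gen_class (PW_rels n) (i, j) \<in> carrier (PW n)"
    using ij by (simp add: PW_def gen_class_carrier)
  show ?thesis
    unfolding C_rowmat[OF ij]
    by (rule graded_rowmat) (use c g in \<open>auto simp: delta_def wel_def rho_xi rho_x split: if_splits\<close>)
qed

lemma graded_Cinv:
  assumes ij: "(i, j) \<in> pw_gens n"
  shows "graded n (inv\<^bsub>PW n\<^esub> gen_class (PW_rels n) (i, j)) (Cinv n i j)"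
proof -
  interpret rh: group_hom "SD n" "PW n" "rho n" by (rule rho_group_hom)
  interpret S: group "SD n" by (rule SD_group)
  interpret P: group "PW n" by (rule PW_group)
  have c: "xi_el n i j \<in> carrier (SD n)" "x_el n i \<in> carrier (SD n)" "x_el n j \<in> carrier (SD n)"
    using ij by (auto simp: pw_gens_def intro: xi_carrier x_carrier)
  have g: "gen_class (PW_rels n) (i, j) \<in> carrier (PW n)"
    using ij by (simp add: PW_def gen_class_carrier)
  show ?thesis
    unfolding Cinv_def
    by (rule graded_rowmat) (use c g in \<open>auto simp: delta_def rho_xi rho_x split: if_splits\<close>)
qed

definition gimg :: "nat \<Rightarrow> nat \<times> nat \<Rightarrow> bool \<Rightarrow> sgen word set gmat" where
  "gimg n a b = (if a \<in> pw_gens n then (if b then C_mat n (fst a) (snd a) else Cinv n (fst a) (snd a))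
                 else mat_one (SD n) n)"

lemma GL_mult: "x \<otimes>\<^bsub>GL G n\<^esub> y = mat_mult G n x y" by (simp add: GL_def)
lemma GL_one: "\<one>\<^bsub>GL G n\<^esub> = mat_one G n" by (simp add: GL_def)

lemma C_is_mat: "(i, j) \<in> pw_gens n \<Longrightarrow> is_mat (SD n) n (C_mat n i j)"
proof -
  assume ij: "(i, j) \<in> pw_gens n"
  interpret S: group "SD n" by (rule SD_group)
  have c: "xi_el n i j \<in> carrier (SD n)" "x_el n i \<in> carrier (SD n)" "x_el n j \<in> carrier (SD n)"
    using ij by (auto simp: pw_gens_def intro: xi_carrier x_carrier)
  show ?thesis unfolding C_rowmat[OF ij]
    by (rule is_mat_rowmat) (use c in \<open>auto simp: wel_def intro!: ga_delta ga_sub\<close>)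
qed

lemma Cinv_is_mat: "(i, j) \<in> pw_gens n \<Longrightarrow> is_mat (SD n) n (Cinv n i j)"
proof -
  assume ij: "(i, j) \<in> pw_gens n"
  interpret S: group "SD n" by (rule SD_group)
  have c: "xi_el n i j \<in> carrier (SD n)" "x_el n i \<in> carrier (SD n)" "x_el n j \<in> carrier (SD n)"
    using ij by (auto simp: pw_gens_def intro: xi_carrier x_carrier)
  show ?thesis unfolding Cinv_def
    by (rule is_mat_rowmat) (use c in \<open>auto intro!: ga_delta ga_sub\<close>)
qed

lemma gimg_carrier: "gimg n a b \<in> carrier (GL (SD n) n)"
proof -
  have M: "monoid (SD n)" using SD_group group.is_monoid by blast
  show ?thesis
  proof (cases "a \<in> pw_gens n")
    case True
    obtain i j where a: "a = (i, j)" by force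
    have ij: "(i, j) \<in> pw_gens n" using True a by simp
    show ?thesis
    proof (cases b)
      case True
      then show ?thesis using ij a C_is_mat[OF ij] Cinv_is_mat[OF ij] C_Cinv[OF ij] Cinv_C[OF ij]
        by (auto simp: gimg_def GL_def intro!: exI[of _ "Cinv n i j"])
    next
      case False
      then show ?thesis using ij a C_is_mat[OF ij] Cinv_is_mat[OF ij] C_Cinv[OF ij] Cinv_C[OF ij]
        by (auto simp: gimg_def GL_def intro!: exI[of _ "C_mat n i j"])
    qed
  next
    case False
    then show ?thesis using is_mat_one[OF M] mat_one_left[OF M is_mat_one[OF M]]
      by (auto simp: gimg_def GL_def)
  qed
qed

lemma gimg_inv: "gimg n a b \<otimes>\<^bsub>GL (SD n) n\<^esub> gimg n a (\<not> b) = \<one>\<^bsub>GL (SD n) n\<^esub>"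
proof -
  have M: "monoid (SD n)" using SD_group group.is_monoid by blast
  show ?thesis
  proof (cases "a \<in> pw_gens n")
    case True
    obtain i j where a: "a = (i, j)" by force
    show ?thesis using True a C_Cinv Cinv_C
      by (cases b) (auto simp: gimg_def GL_mult GL_one)
  next
    case False
    then show ?thesis using mat_one_left[OF M is_mat_one[OF M]]
      by (auto simp: gimg_def GL_mult GL_one)
  qed
qed

context monoid
begin

lemma mcomm1:
  assumes c: "A \<in> carrier G" "B \<in> carrier G" "Ai \<in> carrier G" "Bi \<in> carrier G"
    and i: "Ai \<otimes> A = \<one>" "Bi \<otimes> B = \<one>" and cm: "A \<otimes> B = B \<otimes> A"
  shows "Ai \<otimes> (Bi \<otimes> (A \<otimes> (B \<otimes> \<one>))) = \<one>"
proof -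
  have "Ai \<otimes> (Bi \<otimes> (A \<otimes> (B \<otimes> \<one>))) = Ai \<otimes> ((Bi \<otimes> B) \<otimes> A)"
    using c by (simp add: cm m_assoc)
  also have "\<dots> = \<one>" using c i by simp
  finally show ?thesis .
qed

lemma mcomm3:
  assumes c: "A \<in> carrier G" "B \<in> carrier G" "C \<in> carrier G" "Ai \<in> carrier G" "Bi \<in> carrier G" "Ci \<in> carrier G"
    and i: "Ai \<otimes> A = \<one>" "Bi \<otimes> B = \<one>" "Ci \<otimes> C = \<one>" and cm: "A \<otimes> (B \<otimes> C) = C \<otimes> (A \<otimes> B)"
  shows "Bi \<otimes> (Ai \<otimes> (Ci \<otimes> (A \<otimes> (B \<otimes> (C \<otimes> \<one>))))) = \<one>"
proof -
  have "Bi \<otimes> (Ai \<otimes> (Ci \<otimes> (A \<otimes> (B \<otimes> (C \<otimes> \<one>))))) = Bi \<otimes> (Ai \<otimes> ((Ci \<otimes> C) \<otimes> (A \<otimes> B)))"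
    using c by (simp add: cm m_assoc)
  also have "\<dots> = Bi \<otimes> B"
  proof -
    have "Ai \<otimes> (A \<otimes> B) = B" using c i by (simp add: m_assoc[symmetric])
    then show ?thesis using c i by simp
  qed
  also have "\<dots> = \<one>" using c i by simp
  finally show ?thesis .
qed

end

lemma gimg_rel:
  assumes r: "r \<in> PW_rels n"
  shows "evalw (GL (SD n) n) (gimg n) r = \<one>\<^bsub>GL (SD n) n\<^esub>"
proof -
  have M: "monoid (SD n)" using SD_group group.is_monoid by blast
  interpret H: monoid "GL (SD n) n" by (rule GL_monoid[OF M])
  have cl: "\<And>a b. gimg n a b \<in> carrier (GL (SD n) n)" by (rule gimg_carrier)
  have iv: "\<And>a. gimg n a False \<otimes>\<^bsub>GL (SD n) n\<^esub> gimg n a True = \<one>\<^bsub>GL (SD n) n\<^esub>"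
    using gimg_inv[of n _ False] by simp
  from r consider
    (m1) i j s t where "r = comm_word [((i, j), True)] [((s, t), True)]" "(i, j) \<in> pw_gens n" "(s, t) \<in> pw_gens n"
      "{i, j} \<inter> {s, t} = {}"
  | (m2) i j k where "r = comm_word [((i, j), True)] [((k, j), True)]" "i \<in> {1..n}" "j \<in> {1..n}" "k \<in> {1..n}"
      "i \<noteq> j" "j \<noteq> k" "i \<noteq> k"
  | (m3) i j k where "r = comm_word [((i, j), True), ((k, j), True)] [((i, k), True)]" "i \<in> {1..n}" "j \<in> {1..n}"
      "k \<in> {1..n}" "i \<noteq> j" "j \<noteq> k" "i \<noteq> k"
    unfolding PW_rels_def mccool_rels_def Let_def by auto
  then show ?thesis
  proof cases
    case m1
    have cm: "gimg n (i, j) True \<otimes>\<^bsub>GL (SD n) n\<^esub> gimg n (s, t) True = gimg n (s, t) True \<otimes>\<^bsub>GL (SD n) n\<^esub> gimg n (i, j) True"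
      using m1 C_comm1 by (simp add: gimg_def GL_mult)
    show ?thesis using m1(1) H.mcomm1[OF cl cl cl cl iv iv cm] by (simp add: comm_word_def)
  next
    case m2
    have ij: "(i, j) \<in> pw_gens n" "(k, j) \<in> pw_gens n" using m2 by (auto simp: pw_gens_def)
    have cm: "gimg n (i, j) True \<otimes>\<^bsub>GL (SD n) n\<^esub> gimg n (k, j) True = gimg n (k, j) True \<otimes>\<^bsub>GL (SD n) n\<^esub> gimg n (i, j) True"
      using m2 ij C_comm2[of i n j k] by (simp add: gimg_def GL_mult)
    show ?thesis using m2(1) H.mcomm1[OF cl cl cl cl iv iv cm] by (simp add: comm_word_def)
  next
    case m3
    have ij: "(i, j) \<in> pw_gens n" "(k, j) \<in> pw_gens n" "(i, k) \<in> pw_gens n" using m3 by (auto simp: pw_gens_def)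
    have "(gimg n (i, j) True \<otimes>\<^bsub>GL (SD n) n\<^esub> gimg n (k, j) True) \<otimes>\<^bsub>GL (SD n) n\<^esub> gimg n (i, k) True
        = (gimg n (i, k) True \<otimes>\<^bsub>GL (SD n) n\<^esub> gimg n (i, j) True) \<otimes>\<^bsub>GL (SD n) n\<^esub> gimg n (k, j) True"
      using m3 ij C_comm3[of i n j k] by (simp add: gimg_def GL_mult)
    then have cm: "gimg n (i, j) True \<otimes>\<^bsub>GL (SD n) n\<^esub> (gimg n (k, j) True \<otimes>\<^bsub>GL (SD n) n\<^esub> gimg n (i, k) True)
        = gimg n (i, k) True \<otimes>\<^bsub>GL (SD n) n\<^esub> (gimg n (i, j) True \<otimes>\<^bsub>GL (SD n) n\<^esub> gimg n (k, j) True)"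
      using cl by (simp add: H.m_assoc)
    show ?thesis using m3(1) H.mcomm3[OF cl cl cl cl cl cl iv iv iv cm] by (simp add: comm_word_def)
  qed
qed

lemma pres_class_false:
  assumes "a \<in> S"
  shows "pres_class R [(a, False)] = inv\<^bsub>presented_group S R\<^esub> gen_class R a"
proof -
  interpret group "presented_group S R" by (rule presented_group_is_group)
  have "pres_class R [(a, False)] = geval R S [(a, False)]"
    using assms by (intro pres_class_geval) auto
  then show ?thesis using gen_class_carrier[OF assms, of R] by (simp add: geval_def)
qed

lemma graded_evalw:
  "set w \<subseteq> pw_gens n \<times> UNIV \<Longrightarrow> graded n (pres_class (PW_rels n) w) (evalw (GL (SD n) n) (gimg n) w)"
proof (induction w)
  case Nil
  then show ?case using graded_one[of n] by (simp add: GL_one PW_def pres_one)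
next
  case (Cons x w)
  obtain a b where x: "x = (a, b)" by (rule prod.exhaust)
  have a: "a \<in> pw_gens n" and w: "set w \<subseteq> pw_gens n \<times> UNIV" using Cons x by auto
  obtain i j where aij: "a = (i, j)" by force
  have g: "graded n (pres_class (PW_rels n) [(a, b)]) (gimg n a b)"
  proof (cases b)
    case True
    then show ?thesis using graded_C[of i j n] a aij by (simp add: gimg_def gen_class_def)
  next
    case False
    then show ?thesis using graded_Cinv[of i j n] a aij pres_class_false[OF a, of "PW_rels n"]
      by (simp add: gimg_def PW_def)
  qed
  have "graded n (pres_class (PW_rels n) [(a, b)] \<otimes>\<^bsub>PW n\<^esub> pres_class (PW_rels n) w)
          (mat_mult (SD n) n (gimg n a b) (evalw (GL (SD n) n) (gimg n) w))"
    by (rule graded_mult[OF g Cons.IH[OF w]])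
  then show ?case using x by (simp add: PW_def pres_mult GL_mult)
qed

theorem theorem3p3:
  fixes n :: nat
  assumes "n \<ge> 2"
  shows "\<exists>\<Psi>. \<Psi> \<in> hom (PW n) (GL (SD n) n)
            \<and> (\<forall>i j. (i, j) \<in> pw_gens n \<longrightarrow> \<Psi> (gen_class (PW_rels n) (i, j)) = C_mat n i j)
            \<and> inj_on \<Psi> (carrier (PW n))"
proof -
  have M: "monoid (SD n)" using SD_group group.is_monoid by blast
  have H: "monoid (GL (SD n) n)" by (rule GL_monoid[OF M])
  obtain \<Psi> where hom0: "\<Psi> \<in> hom (presented_group (pw_gens n) (PW_rels n)) (GL (SD n) n)"
    and ev: "\<And>w. \<Psi> (pres_class (PW_rels n) w) = evalw (GL (SD n) n) (gimg n) w"
    using presented_hom[OF H gimg_carrier gimg_inv gimg_rel] by blast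
  have hom: "\<Psi> \<in> hom (PW n) (GL (SD n) n)" using hom0 by (simp add: PW_def)
  have gen: "\<Psi> (gen_class (PW_rels n) (i, j)) = C_mat n i j" if ij: "(i, j) \<in> pw_gens n" for i j
  proof -
    have "\<Psi> (gen_class (PW_rels n) (i, j)) = mat_mult (SD n) n (C_mat n i j) (mat_one (SD n) n)"
      using ij by (simp add: gen_class_def ev gimg_def GL_mult GL_one)
    also have "\<dots> = C_mat n i j" by (rule mat_one_right[OF M C_is_mat[OF ij]])
    finally show ?thesis .
  qed
  have inj: "inj_on \<Psi> (carrier (PW n))"
  proof (rule inj_onI)
    fix X Y assume X: "X \<in> carrier (PW n)" and Y: "Y \<in> carrier (PW n)" and eq: "\<Psi> X = \<Psi> Y"
    interpret P: group "PW n" by (rule PW_group)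
    interpret rh: group_hom "SD n" "PW n" "rho n" by (rule rho_group_hom)
    let ?Z = "X \<otimes>\<^bsub>PW n\<^esub> inv\<^bsub>PW n\<^esub> Y"
    have Z: "?Z \<in> carrier (PW n)" using X Y by simp
    have "\<Psi> ?Z = \<Psi> X \<otimes>\<^bsub>GL (SD n) n\<^esub> \<Psi> (inv\<^bsub>PW n\<^esub> Y)"
      using hom X Y by (simp add: hom_mult)
    also have "\<dots> = \<Psi> Y \<otimes>\<^bsub>GL (SD n) n\<^esub> \<Psi> (inv\<^bsub>PW n\<^esub> Y)" using eq by simp
    also have "\<dots> = \<Psi> (Y \<otimes>\<^bsub>PW n\<^esub> inv\<^bsub>PW n\<^esub> Y)"
      by (rule sym, rule hom_mult[OF hom Y P.inv_closed[OF Y]])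
    also have "\<dots> = \<Psi> \<one>\<^bsub>PW n\<^esub>" using Y by simp
    also have "\<dots> = \<Psi> (pres_class (PW_rels n) [])" by (simp add: PW_def pres_one)
    also have "\<dots> = mat_one (SD n) n" by (simp add: ev GL_one)
    finally have PZ: "\<Psi> ?Z = mat_one (SD n) n" .
    obtain w where w: "?Z = pres_class (PW_rels n) w" "set w \<subseteq> pw_gens n \<times> UNIV"
      using Z by (auto simp: PW_def pres_carrier)
    have "graded n ?Z (mat_one (SD n) n)"
      using graded_evalw[OF w(2)] w(1) PZ ev by simp
    moreover have "mat_one (SD n) n 1 1 \<one>\<^bsub>SD n\<^esub> \<noteq> 0"
      using assms by (simp add: mat_one_def delta_def)
    ultimately have "rho n \<one>\<^bsub>SD n\<^esub> = ?Z" unfolding graded_def by blast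
    then have "?Z = \<one>\<^bsub>PW n\<^esub>" by simp
    then show "X = Y" using X Y by (simp add: P.inv_solve_right')
  qed
  show ?thesis using hom gen inj by blast
qed

end
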